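(* Let $\mathbb L_h$ be an achiral lattice, and let $\mathbb L_e$ be an elliptic lattice which is generated by $2$-roots and has discriminant of period 2. Then their direct sum, $\mathbb L= \mathbb L_e +\mathbb L_h$, is also an achiral lattice.
   Context: Lattices considered are even lattices $\mathbb L$ of signature $(n,1)$ with $\operatorname{discr}\mathbb L=\operatorname{discr}_2\mathbb L+\mathbb Z/3$, $\operatorname{discr}_2$ of period 2. Roots: 2-roots ($v^2=2$) and 6-roots ($v^2=6$, $v\cdot\mathbb L\subset3\mathbb Z$); their reflections generate $W$, whose fundamental chambers in the hyperbolic space $\Lambda$ (projectivized negative cone) are the cells $P$; each cell lifts to two cells $\pm P^\#$ in the double cover $\Lambda^\#$. An automorphism preserving $P$ is $P$-direct if it preserves $P^\#$, and $\mathbb Z/3$-reversing if it acts as $-\operatorname{id}$ on $\operatorname{discr}_3\mathbb L=\mathbb Z/3$. A lattice is achiral if it admits an automorphism that is $\mathbb Z/3$-reversing and $P$-direct for some cell $P$. "Elliptic" means positive definite; $+$ is orthogonal direct sum. *)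

theory Defs
  imports "HOL-Analysis.Analysis"
begin

text \<open>A lattice of rank CARD('n) is Z^'n equipped with an integral symmetric
Gram matrix G. Everything is embedded in R^'n.\<close>

definition rvec :: "int^'n \<Rightarrow> real^'n" where
  "rvec v = (\<chi> i. real_of_int (v$i))"

definition rmat :: "int^'n^'m \<Rightarrow> real^'n^'m" where
  "rmat g = (\<chi> i j. real_of_int (g$i$j))"

definition bil :: "int^'n^'n \<Rightarrow> 'a::comm_ring_1^'n \<Rightarrow> 'a^'n \<Rightarrow> 'a" where
  "bil G x y = (\<Sum>i\<in>UNIV. \<Sum>j\<in>UNIV. x$i * of_int (G$i$j) * y$j)"

definition symmetric_gram :: "int^'n^'n \<Rightarrow> bool" where
  "symmetric_gram G \<longleftrightarrow> (\<forall>i j. G$i$j = G$j$i)"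

definition even_lattice :: "int^'n^'n \<Rightarrow> bool" where
  "even_lattice G \<longleftrightarrow> (\<forall>v::int^'n. even (bil G v v))"

text \<open>Signature (n,1), n = CARD('n) - 1: real congruence to diag(1,...,1,-1).\<close>
definition hyperbolic_signature :: "int^'n^'n \<Rightarrow> bool" where
  "hyperbolic_signature G \<longleftrightarrow>
     (\<exists>P::real^'n^'n. \<exists>k. invertible P \<and>
        transpose P ** rmat G ** P = (\<chi> i j. if i = j then (if i = k then -1 else 1) else 0))"

text \<open>Elliptic = positive definite.\<close>
definition positive_definite :: "int^'n^'n \<Rightarrow> bool" where
  "positive_definite G \<longleftrightarrow> (\<forall>x::real^'n. x \<noteq> 0 \<longrightarrow> bil G x x > 0)"

definition lat :: "(real^'n) set" where
  "lat = range rvec"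

definition dual_lat :: "int^'n^'n \<Rightarrow> (real^'n) set" where
  "dual_lat G = {x. \<forall>v::int^'n. bil G x (rvec v) \<in> \<int>}"

text \<open>k-torsion of the discriminant group L^*/L (as a set of representatives in L^*)
  and the congruence modulo L.\<close>
definition disc_torsion :: "int^'n^'n \<Rightarrow> real \<Rightarrow> (real^'n) set" where
  "disc_torsion G k = {x \<in> dual_lat G. k *\<^sub>R x \<in> lat}"

definition mod_lat :: "((real^'n) \<times> (real^'n)) set" where
  "mod_lat = {(x, y). x - y \<in> lat}"

text \<open>discr L = discr_2 L + Z/3 with discr_2 of period 2: the discriminant group is
  killed by 6 and its 3-primary part has order 3.\<close>
definition discr_condition :: "int^'n^'n \<Rightarrow> bool" where
  "discr_condition G \<longleftrightarrow>
     (\<forall>x\<in>dual_lat G. 6 *\<^sub>R x \<in> lat) \<and> card (disc_torsion G 3 // mod_lat) = 3"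

definition discr_period2 :: "int^'n^'n \<Rightarrow> bool" where
  "discr_period2 G \<longleftrightarrow> (\<forall>x\<in>dual_lat G. 2 *\<^sub>R x \<in> lat)"

definition considered_lattice :: "int^'n^'n \<Rightarrow> bool" where
  "considered_lattice G \<longleftrightarrow> symmetric_gram G \<and> even_lattice G \<and>
     hyperbolic_signature G \<and> discr_condition G"

definition two_roots :: "int^'n^'n \<Rightarrow> (int^'n) set" where
  "two_roots G = {v. bil G v v = 2}"

definition six_roots :: "int^'n^'n \<Rightarrow> (int^'n) set" where
  "six_roots G = {v. bil G v v = 6 \<and> (\<forall>w. 3 dvd bil G v w)}"

definition roots :: "int^'n^'n \<Rightarrow> (int^'n) set" where
  "roots G = two_roots G \<union> six_roots G"

inductive_set zspan :: "(int^'n) set \<Rightarrow> (int^'n) set" for S where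
  zero: "0 \<in> zspan S"
| add: "v \<in> S \<Longrightarrow> w \<in> zspan S \<Longrightarrow> v + w \<in> zspan S"
| sub: "v \<in> S \<Longrightarrow> w \<in> zspan S \<Longrightarrow> w - v \<in> zspan S"

definition generated_by_2roots :: "int^'n^'n \<Rightarrow> bool" where
  "generated_by_2roots G \<longleftrightarrow> zspan (two_roots G) = UNIV"

definition negative_cone :: "int^'n^'n \<Rightarrow> (real^'n) set" where
  "negative_cone G = {x. bil G x x < 0}"

text \<open>Cells P^# of the double cover: connected components of the negative cone
  minus the mirrors of all roots (open cones over the cells).\<close>
definition cells_sharp :: "int^'n^'n \<Rightarrow> (real^'n) set set" where
  "cells_sharp G = components (negative_cone G - (\<Union>r\<in>roots G. {x. bil G x (rvec r) = 0}))"

definition automorphism :: "int^'n^'n \<Rightarrow> int^'n^'n \<Rightarrow> bool" where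
  "automorphism G g \<longleftrightarrow> (\<exists>h. h ** g = mat 1 \<and> g ** h = mat 1) \<and>
     (\<forall>v w. bil G (g *v v) (g *v w) = bil G v w)"

text \<open>g acts as -id on discr_3 L.\<close>
definition Z3_reversing :: "int^'n^'n \<Rightarrow> int^'n^'n \<Rightarrow> bool" where
  "Z3_reversing G g \<longleftrightarrow> (\<forall>x\<in>disc_torsion G 3. rmat g *v x + x \<in> lat)"

definition P_direct :: "int^'n^'n \<Rightarrow> (real^'n) set \<Rightarrow> bool" where
  "P_direct g K \<longleftrightarrow> (\<lambda>x. rmat g *v x) ` K = K"

definition achiral :: "int^'n^'n \<Rightarrow> bool" where
  "achiral G \<longleftrightarrow> considered_lattice G \<and>
     (\<exists>g K. automorphism G g \<and> K \<in> cells_sharp G \<and> Z3_reversing G g \<and> P_direct g K)"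

definition dsum :: "int^'e^'e \<Rightarrow> int^'h^'h \<Rightarrow> int^('e+'h)^('e+'h)" where
  "dsum A B = (\<chi> i j. case (i, j) of (Inl a, Inl b) \<Rightarrow> A$a$b
                                | (Inr a, Inr b) \<Rightarrow> B$a$b
                                | _ \<Rightarrow> 0)"

end

theory Submission
  imports Defs
begin

definition imat :: "int^'n^'m \<Rightarrow> 'a::comm_ring_1^'n^'m" where
  "imat g = (\<chi> i j. of_int (g$i$j))"

definition gbil :: "'a::comm_ring_1^'n^'n \<Rightarrow> 'a^'n \<Rightarrow> 'a^'n \<Rightarrow> 'a" where
  "gbil M x y = (\<Sum>i\<in>UNIV. \<Sum>j\<in>UNIV. x$i * M$i$j * y$j)"

lemma bil_gbil: "bil G x y = gbil (imat G) x y"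
  by (simp add: bil_def gbil_def imat_def)

lemma rmat_imat: "rmat g = imat g"
  by (simp add: rmat_def imat_def)

lemma imat_int[simp]: "imat g = (g :: int^'n^'m)"
  by (simp add: imat_def vec_eq_iff)

lemma imat_mult: "(imat (A ** B) :: 'a::comm_ring_1^_^_) = imat A ** imat B"
  by (simp add: imat_def matrix_matrix_mult_def vec_eq_iff of_int_sum)

lemma sum4: "(\<Sum>i\<in>A. \<Sum>j\<in>B. \<Sum>k\<in>C. \<Sum>l\<in>D. f i j k l) = (\<Sum>k\<in>C. \<Sum>l\<in>D. \<Sum>i\<in>A. \<Sum>j\<in>B. f i j k l)"
proof -
  have "(\<Sum>i\<in>A. \<Sum>j\<in>B. \<Sum>k\<in>C. \<Sum>l\<in>D. f i j k l) = (\<Sum>i\<in>A. \<Sum>k\<in>C. \<Sum>j\<in>B. \<Sum>l\<in>D. f i j k l)"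
    by (rule sum.cong[OF refl], rule sum.swap)
  also have "\<dots> = (\<Sum>i\<in>A. \<Sum>k\<in>C. \<Sum>l\<in>D. \<Sum>j\<in>B. f i j k l)"
    by (rule sum.cong[OF refl], rule sum.cong[OF refl], rule sum.swap)
  also have "\<dots> = (\<Sum>k\<in>C. \<Sum>i\<in>A. \<Sum>l\<in>D. \<Sum>j\<in>B. f i j k l)"
    by (rule sum.swap)
  also have "\<dots> = (\<Sum>k\<in>C. \<Sum>l\<in>D. \<Sum>i\<in>A. \<Sum>j\<in>B. f i j k l)"
    by (rule sum.cong[OF refl], rule sum.swap)
  finally show ?thesis .
qed

lemma gbil_mv: "gbil M (A *v x) (A *v y) = gbil (transpose A ** M ** A) x y"
proof -
  have "gbil M (A *v x) (A *v y) =
     (\<Sum>i\<in>UNIV. \<Sum>j\<in>UNIV. \<Sum>k\<in>UNIV. \<Sum>l\<in>UNIV. x$k * (A$i$k * M$i$j * A$j$l) * y$l)"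
    by (simp add: gbil_def matrix_vector_mult_def sum_distrib_left sum_distrib_right mult_ac)
  also have "\<dots> = (\<Sum>k\<in>UNIV. \<Sum>l\<in>UNIV. \<Sum>i\<in>UNIV. \<Sum>j\<in>UNIV. x$k * (A$i$k * M$i$j * A$j$l) * y$l)"
    by (rule sum4)
  also have "\<dots> = (\<Sum>k\<in>UNIV. \<Sum>l\<in>UNIV. \<Sum>j\<in>UNIV. \<Sum>i\<in>UNIV. x$k * (A$i$k * M$i$j * A$j$l) * y$l)"
    by (rule sum.cong[OF refl], rule sum.cong[OF refl], rule sum.swap)
  also have "\<dots> = gbil (transpose A ** M ** A) x y"
    by (simp add: gbil_def matrix_matrix_mult_def transpose_def sum_distrib_left sum_distrib_right mult_ac)
  finally show ?thesis .
qed

lemma gbil_axis: "gbil M (axis i 1) (axis j 1) = M$i$j"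
  unfolding gbil_def axis_def by (simp add: mult_delta_left mult_delta_right sum.delta)
lemma gbil_add_left: "gbil M (x + y) z = gbil M x z + gbil M y z"
  by (simp add: gbil_def distrib_right distrib_left sum.distrib)
lemma gbil_add_right: "gbil M z (x + y) = gbil M z x + gbil M z y"
  by (simp add: gbil_def distrib_right distrib_left sum.distrib)
lemma gbil_diff_left: "gbil M (x - y) z = gbil M x z - gbil M y z"
  by (simp add: gbil_def left_diff_distrib right_diff_distrib sum_subtractf)
lemma gbil_diff_right: "gbil M z (x - y) = gbil M z x - gbil M z y"
  by (simp add: gbil_def left_diff_distrib right_diff_distrib sum_subtractf)
lemma gbil_smult_left: "gbil M (c *s x) z = c * gbil M x z"
  by (simp add: gbil_def sum_distrib_left mult_ac)
lemma gbil_smult_right: "gbil M z (c *s x) = c * gbil M z x"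
  by (simp add: gbil_def sum_distrib_left mult_ac)
lemma gbil_zero_left[simp]: "gbil M 0 z = 0"
  by (simp add: gbil_def)
lemma gbil_zero_right[simp]: "gbil M z 0 = 0"
  by (simp add: gbil_def)
lemma gbil_minus_left: "gbil M (- x) z = - gbil M x z"
  by (simp add: gbil_def sum_negf)
lemma gbil_minus_right: "gbil M z (- x) = - gbil M z x"
  by (simp add: gbil_def sum_negf)
lemma gbil_sum_left: "finite S \<Longrightarrow> gbil M (\<Sum>i\<in>S. f i) z = (\<Sum>i\<in>S. gbil M (f i) z)"
  by (induct S rule: finite_induct) (auto simp: gbil_add_left)
lemma gbil_sym: "(\<forall>i j. M$i$j = M$j$i) \<Longrightarrow> gbil M x y = gbil M y x"
  unfolding gbil_def by (subst sum.swap) (simp add: mult_ac)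

lemma gbil_scaleR_left: "gbil M (c *\<^sub>R x) z = c * gbil M x z" for M :: "real^'n^'n"
  by (metis gbil_smult_left scalar_mult_eq_scaleR)
lemma gbil_scaleR_right: "gbil M z (c *\<^sub>R x) = c * gbil M z x" for M :: "real^'n^'n"
  by (metis gbil_smult_right scalar_mult_eq_scaleR)

lemma rvec_of_int: "gbil (imat G) (rvec a) (rvec b) = real_of_int (bil G a b)"
  by (simp add: gbil_def bil_def rvec_def imat_def)

lemma bil_rvec: "bil G (rvec a) (rvec b) = real_of_int (bil G a b)"
  by (simp add: bil_gbil rvec_of_int)

lemma rvec_mv: "rvec (A *v v) = rmat A *v rvec v"
  by (simp add: rvec_def rmat_def matrix_vector_mult_def vec_eq_iff)

lemma rvec_add: "rvec (a + b) = rvec a + rvec b" by (simp add: rvec_def vec_eq_iff)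
lemma rvec_diff: "rvec (a - b) = rvec a - rvec b" by (simp add: rvec_def vec_eq_iff)
lemma rvec_zero[simp]: "rvec 0 = 0" by (simp add: rvec_def vec_eq_iff)
lemma rvec_smult: "rvec (c *s a) = of_int c *\<^sub>R rvec a" by (simp add: rvec_def vec_eq_iff)
lemma rvec_inj: "rvec a = rvec b \<longleftrightarrow> a = b" by (simp add: rvec_def vec_eq_iff)

lemma lat_add: "x \<in> lat \<Longrightarrow> y \<in> lat \<Longrightarrow> x + y \<in> lat"
  unfolding lat_def by (auto simp flip: rvec_add)
lemma lat_diff: "x \<in> lat \<Longrightarrow> y \<in> lat \<Longrightarrow> x - y \<in> lat"
  unfolding lat_def by (auto simp flip: rvec_diff)
lemma lat_zero: "0 \<in> lat"
  unfolding lat_def by (metis rangeI rvec_zero)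
lemma lat_int_scale: "x \<in> lat \<Longrightarrow> of_int c *\<^sub>R x \<in> lat"
  unfolding lat_def by (metis rangeE rangeI rvec_smult)
lemma lat_rvec: "rvec a \<in> lat" by (simp add: lat_def)

definition vp :: "'a^'e::finite \<Rightarrow> 'a^'h::finite \<Rightarrow> 'a^('e+'h)" where
  "vp x y = (\<chi> i. case i of Inl a \<Rightarrow> x$a | Inr b \<Rightarrow> y$b)"
definition pe :: "'a^('e::finite+'h::finite) \<Rightarrow> 'a^'e" where "pe z = (\<chi> a. z$(Inl a))"
definition ph :: "'a^('e::finite+'h::finite) \<Rightarrow> 'a^'h" where "ph z = (\<chi> b. z$(Inr b))"

lemma all_sum_iff: "(\<forall>x::'a+'b. P x) \<longleftrightarrow> (\<forall>a. P (Inl a)) \<and> (\<forall>b. P (Inr b))"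
  by (metis sum.exhaust)

lemma vp_Inl[simp]: "vp x y $ Inl a = x$a" by (simp add: vp_def)
lemma vp_Inr[simp]: "vp x y $ Inr b = y$b" by (simp add: vp_def)
lemma pe_nth[simp]: "pe z $ a = z $ Inl a" by (simp add: pe_def)
lemma ph_nth[simp]: "ph z $ a = z $ Inr a" by (simp add: ph_def)
lemma pe_vp[simp]: "pe (vp x y) = x" by (simp add: vec_eq_iff)
lemma ph_vp[simp]: "ph (vp x y) = y" by (simp add: vec_eq_iff)
lemma vp_pe_ph[simp]: "vp (pe z) (ph z) = z"
  by (simp add: vec_eq_iff vp_def split: sum.split)
lemma vp_eq_iff: "vp x y = vp x' y' \<longleftrightarrow> x = x' \<and> y = y'"
  by (metis pe_vp ph_vp)
lemma vp_add: "vp x y + vp x' y' = vp (x + x') (y + y')"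
  by (simp add: vec_eq_iff vp_def split: sum.split)
lemma vp_diff: "vp x y - vp x' y' = vp (x - x') (y - y')"
  by (simp add: vec_eq_iff vp_def split: sum.split)
lemma vp_scaleR: "c *\<^sub>R vp x y = vp (c *\<^sub>R x) (c *\<^sub>R y)"
  by (simp add: vec_eq_iff vp_def split: sum.split)
lemma vp_zero: "vp 0 0 = 0"
  by (simp add: vec_eq_iff vp_def split: sum.split)
lemma pe_add: "pe (x + y) = pe x + pe y" by (simp add: vec_eq_iff)
lemma ph_add: "ph (x + y) = ph x + ph y" by (simp add: vec_eq_iff)
lemma pe_diff: "pe (x - y) = pe x - pe y" by (simp add: vec_eq_iff)
lemma ph_diff: "ph (x - y) = ph x - ph y" by (simp add: vec_eq_iff)
lemma pe_scaleR: "pe (c *\<^sub>R x) = c *\<^sub>R pe x" by (simp add: vec_eq_iff)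
lemma ph_scaleR: "ph (c *\<^sub>R x) = c *\<^sub>R ph x" by (simp add: vec_eq_iff)
lemma pe_zero[simp]: "pe 0 = 0" by (simp add: vec_eq_iff)
lemma ph_zero[simp]: "ph 0 = 0" by (simp add: vec_eq_iff)
lemma rvec_vp: "rvec (vp a b) = vp (rvec a) (rvec b)"
  by (simp add: vec_eq_iff rvec_def vp_def split: sum.split)
lemma rvec_pe: "pe (rvec r) = rvec (pe r)" by (simp add: vec_eq_iff rvec_def)
lemma rvec_ph: "ph (rvec r) = rvec (ph r)" by (simp add: vec_eq_iff rvec_def)

lemma sum_UNIV_Plus: "(\<Sum>i\<in>(UNIV::('e::finite+'h::finite) set). f i) = (\<Sum>a\<in>UNIV. f (Inl a)) + (\<Sum>b\<in>UNIV. f (Inr b))"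
proof -
  have "(\<Sum>i\<in>(UNIV::('e+'h) set). f i) = (\<Sum>i\<in>(UNIV <+> UNIV). f i)" by simp
  also have "\<dots> = (\<Sum>a\<in>UNIV. f (Inl a)) + (\<Sum>b\<in>UNIV. f (Inr b))"
    by (subst sum.Plus) (auto simp: o_def)
  finally show ?thesis .
qed

definition bdsum :: "'a::comm_ring_1^'e::finite^'e \<Rightarrow> 'a^'h::finite^'h \<Rightarrow> 'a^('e+'h)^('e+'h)" where
  "bdsum A B = (\<chi> i j. case (i, j) of (Inl a, Inl b) \<Rightarrow> A$a$b
                                | (Inr a, Inr b) \<Rightarrow> B$a$b
                                | _ \<Rightarrow> 0)"

lemma bdsum_nth[simp]: "bdsum A B $ Inl a $ Inl b = A$a$b" "bdsum A B $ Inr c $ Inr d = B$c$d"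
  "bdsum A B $ Inl a $ Inr d = 0" "bdsum A B $ Inr c $ Inl b = 0"
  by (simp_all add: bdsum_def)

lemma dsum_bdsum: "dsum A B = bdsum A B"
  by (simp add: dsum_def bdsum_def)

lemma imat_dsum: "imat (dsum A B) = bdsum (imat A) (imat B)"
  by (simp add: imat_def dsum_def bdsum_def vec_eq_iff split: sum.split)

lemma bdsum_mv: "bdsum A B *v vp x y = vp (A *v x) (B *v y)"
  by (simp add: vec_eq_iff matrix_vector_mult_def sum_UNIV_Plus all_sum_iff split: sum.split)

lemma bdsum_mult: "bdsum A B ** bdsum C D = bdsum (A ** C) (B ** D)"
  by (simp add: vec_eq_iff matrix_matrix_mult_def sum_UNIV_Plus all_sum_iff split: sum.split)

lemma bdsum_one: "bdsum (mat 1) (mat 1) = (mat 1 :: 'a::comm_ring_1^('e::finite+'h::finite)^('e+'h))"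
  by (simp add: vec_eq_iff mat_def all_sum_iff split: sum.split)

lemma transpose_bdsum: "transpose (bdsum A B) = bdsum (transpose A) (transpose B)"
  by (simp add: vec_eq_iff transpose_def all_sum_iff split: sum.split)

lemma gbil_bdsum: "gbil (bdsum A B) x y = gbil A (pe x) (pe y) + gbil B (ph x) (ph y)"
  by (simp add: gbil_def sum_UNIV_Plus sum.distrib)

lemma bil_dsum: "bil (dsum A B) x y = bil A (pe x) (pe y) + bil B (ph x) (ph y)"
  by (simp add: bil_gbil imat_dsum gbil_bdsum)

lemma rmat_dsum_mv: "rmat (dsum A B) *v vp x y = vp (rmat A *v x) (rmat B *v y)"
  by (simp add: rmat_imat imat_dsum bdsum_mv)

lemma dsum_mv: "dsum A B *v vp x y = vp (A *v x) (B *v y)"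
  by (simp add: dsum_bdsum bdsum_mv)

lemma dsum_mult: "dsum A B ** dsum C D = dsum (A ** C) (B ** D)"
  by (simp add: dsum_bdsum bdsum_mult)

lemma dsum_one: "dsum (mat 1) (mat 1) = (mat 1 :: int^('e::finite+'h::finite)^('e+'h))"
  by (simp add: dsum_bdsum bdsum_one)

lemma bil_int_sym: "symmetric_gram G \<Longrightarrow> bil G v w = bil G w (v::'a::comm_ring_1^'n)"
  unfolding bil_gbil by (rule gbil_sym) (simp add: imat_def symmetric_gram_def)

lemma bil_int_add: "bil G (v + w) u = bil G v u + bil G w u" "bil G u (v + w) = bil G u v + bil G u w"
  by (simp_all add: bil_gbil gbil_add_left gbil_add_right)
lemma bil_int_diff: "bil G (v - w) u = bil G v u - bil G w u" "bil G u (v - w) = bil G u v - bil G u w"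
  by (simp_all add: bil_gbil gbil_diff_left gbil_diff_right)
lemma bil_zero[simp]: "bil G 0 u = 0" "bil G u 0 = 0"
  by (simp_all add: bil_gbil)
lemma bil_scaleR: "bil G (c *\<^sub>R x) y = c * bil G x y" "bil G y (c *\<^sub>R x) = c * bil G y x"
  for x y :: "real^'n"
  by (simp_all add: bil_gbil gbil_scaleR_left gbil_scaleR_right)
lemma bil_smult: "bil G (c *s x) y = c * bil G x y" "bil G y (c *s x) = c * bil G y x"
  by (simp_all add: bil_gbil gbil_smult_left gbil_smult_right)

lemma even_from_2roots:
  fixes G :: "int^'n::finite^'n"
  assumes "symmetric_gram G" "generated_by_2roots G"
  shows "even_lattice G"
  unfolding even_lattice_def
proof
  fix v :: "int^'n"
  have "v \<in> zspan (two_roots G)" using assms(2) by (simp add: generated_by_2roots_def)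
  then show "even (bil G v v)"
  proof (induct rule: zspan.induct)
    case zero then show ?case by simp
  next
    case (add v w)
    have "bil G (v + w) (v + w) = bil G v v + 2 * bil G v w + bil G w w"
      using bil_int_sym[OF assms(1), of w v] by (simp add: bil_int_add)
    with add show ?case by (simp add: two_roots_def)
  next
    case (sub v w)
    have "bil G (w - v) (w - v) = bil G w w - 2 * bil G v w + bil G v v"
      using bil_int_sym[OF assms(1), of w v] by (simp add: bil_int_diff)
    with sub show ?case by (simp add: two_roots_def)
  qed
qed

lemma symmetric_dsum: "symmetric_gram A \<Longrightarrow> symmetric_gram B \<Longrightarrow> symmetric_gram (dsum A B)"
  by (simp add: symmetric_gram_def dsum_bdsum all_sum_iff)

lemma even_dsum: "even_lattice A \<Longrightarrow> even_lattice B \<Longrightarrow> even_lattice (dsum A B)"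
  by (simp add: even_lattice_def bil_dsum)

lemma lat_vp: "vp x y \<in> lat \<longleftrightarrow> x \<in> lat \<and> y \<in> lat"
proof
  assume "vp x y \<in> lat"
  then obtain r where "vp x y = rvec r" by (auto simp: lat_def)
  then have "x = rvec (pe r)" "y = rvec (ph r)" by (metis pe_vp rvec_pe, metis ph_vp rvec_ph)
  then show "x \<in> lat \<and> y \<in> lat" by (simp add: lat_rvec)
next
  assume "x \<in> lat \<and> y \<in> lat"
  then obtain a b where "x = rvec a" "y = rvec b" by (auto simp: lat_def)
  then show "vp x y \<in> lat" by (simp add: rvec_vp[symmetric] lat_rvec)
qed

lemma lat_iff: "z \<in> lat \<longleftrightarrow> pe z \<in> lat \<and> ph z \<in> lat"
  by (metis lat_vp vp_pe_ph)

lemma lat_in_dual: "x \<in> lat \<Longrightarrow> x \<in> dual_lat G"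
  by (auto simp: lat_def dual_lat_def bil_rvec)

lemma dual_dsum: "z \<in> dual_lat (dsum A B) \<longleftrightarrow> pe z \<in> dual_lat A \<and> ph z \<in> dual_lat B"
proof
  assume z: "z \<in> dual_lat (dsum A B)"
  have "bil A (pe z) (rvec w) \<in> \<int>" for w
    using z[unfolded dual_lat_def, simplified, rule_format, of "vp w 0"]
    by (simp add: bil_dsum rvec_pe rvec_ph)
  moreover have "bil B (ph z) (rvec w) \<in> \<int>" for w
    using z[unfolded dual_lat_def, simplified, rule_format, of "vp 0 w"]
    by (simp add: bil_dsum rvec_pe rvec_ph)
  ultimately show "pe z \<in> dual_lat A \<and> ph z \<in> dual_lat B" by (simp add: dual_lat_def)
next
  assume "pe z \<in> dual_lat A \<and> ph z \<in> dual_lat B"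
  then show "z \<in> dual_lat (dsum A B)"
    by (auto simp: dual_lat_def bil_dsum rvec_pe rvec_ph intro!: Ints_add)
qed

lemma torsion_dsum:
  assumes "discr_period2 A"
  shows "z \<in> disc_torsion (dsum A B) 3 \<longleftrightarrow> pe z \<in> lat \<and> ph z \<in> disc_torsion B 3"
proof
  assume z: "z \<in> disc_torsion (dsum A B) 3"
  then have d: "pe z \<in> dual_lat A" "ph z \<in> dual_lat B" and l: "3 *\<^sub>R z \<in> lat"
    by (auto simp: disc_torsion_def dual_dsum)
  have "3 *\<^sub>R pe z \<in> lat" "3 *\<^sub>R ph z \<in> lat" using l by (auto simp: lat_iff pe_scaleR ph_scaleR)
  moreover have "2 *\<^sub>R pe z \<in> lat" using assms d by (simp add: discr_period2_def)
  ultimately have "3 *\<^sub>R pe z - 2 *\<^sub>R pe z \<in> lat" by (simp add: lat_diff)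
  moreover have "3 *\<^sub>R pe z - 2 *\<^sub>R pe z = pe z"
    by (simp add: scaleR_left_diff_distrib[symmetric])
  ultimately show "pe z \<in> lat \<and> ph z \<in> disc_torsion B 3"
    using d \<open>3 *\<^sub>R ph z \<in> lat\<close> by (simp add: disc_torsion_def)
next
  assume a: "pe z \<in> lat \<and> ph z \<in> disc_torsion B 3"
  then have "pe z \<in> dual_lat A" by (simp add: lat_in_dual)
  moreover have "3 *\<^sub>R pe z \<in> lat" using lat_int_scale[of "pe z" 3] a by simp
  ultimately show "z \<in> disc_torsion (dsum A B) 3"
    using a by (auto simp: disc_torsion_def dual_dsum lat_iff pe_scaleR ph_scaleR)
qed

lemma mod_lat_class: "mod_lat `` {z} = {w. z - w \<in> lat}"
  by (auto simp: mod_lat_def)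

lemma class_eq_iff: "mod_lat `` {z} = mod_lat `` {z'} \<longleftrightarrow> z - z' \<in> lat"
proof
  assume "mod_lat `` {z} = mod_lat `` {z'}"
  moreover have "z' \<in> mod_lat `` {z'}" by (simp add: mod_lat_class lat_zero)
  ultimately have "z' \<in> mod_lat `` {z}" by simp
  then show "z - z' \<in> lat" by (simp add: mod_lat_class)
next
  assume a: "z - z' \<in> lat"
  have "z - w \<in> lat \<longleftrightarrow> z' - w \<in> lat" for w
  proof -
    have "z' - w = (z - w) - (z - z')" "z - w = (z' - w) + (z - z')" by (simp_all add: algebra_simps)
    then show ?thesis using a lat_diff lat_add by metis
  qed
  then show "mod_lat `` {z} = mod_lat `` {z'}" by (simp add: mod_lat_class)
qed

lemma ph_class: "ph ` (mod_lat `` {z}) = mod_lat `` {ph z}"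
proof
  show "ph ` (mod_lat `` {z}) \<subseteq> mod_lat `` {ph z}"
    by (auto simp: mod_lat_class lat_iff ph_diff)
  show "mod_lat `` {ph z} \<subseteq> ph ` (mod_lat `` {z})"
  proof
    fix w assume "w \<in> mod_lat `` {ph z}"
    then have "ph z - w \<in> lat" by (simp add: mod_lat_class)
    moreover have "z - vp (pe z) w = vp 0 (ph z - w)"
      by (metis vp_diff vp_pe_ph diff_self)
    ultimately have "vp (pe z) w \<in> mod_lat `` {z}"
      by (simp add: mod_lat_class lat_vp lat_zero)
    then show "w \<in> ph ` (mod_lat `` {z})" by (metis image_eqI ph_vp)
  qed
qed

lemma card_quot_dsum:
  assumes "discr_period2 A"
  shows "card (disc_torsion (dsum A B) 3 // mod_lat) = card (disc_torsion B 3 // mod_lat)"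
proof (rule bij_betw_same_card)
  let ?T = "disc_torsion (dsum A B) 3"
  show "bij_betw (\<lambda>C. ph ` C) (?T // mod_lat) (disc_torsion B 3 // mod_lat)"
    unfolding bij_betw_def
  proof
    show "inj_on (\<lambda>C. ph ` C) (?T // mod_lat)"
    proof (rule inj_onI)
      fix C D assume "C \<in> ?T // mod_lat" "D \<in> ?T // mod_lat" and e: "ph ` C = ph ` D"
      then obtain z z' where z: "z \<in> ?T" "C = mod_lat `` {z}" and z': "z' \<in> ?T" "D = mod_lat `` {z'}"
        by (auto simp: quotient_def)
      have "ph z - ph z' \<in> lat" using e z z' by (simp add: ph_class class_eq_iff)
      moreover have "pe z - pe z' \<in> lat"
        using torsion_dsum[OF assms, of z B] torsion_dsum[OF assms, of z' B] z(1) z'(1) by (simp add: lat_diff)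
      ultimately have "z - z' \<in> lat" by (simp add: lat_iff pe_diff ph_diff)
      then show "C = D" using z z' by (simp add: class_eq_iff)
    qed
    show "(\<lambda>C. ph ` C) ` (?T // mod_lat) = disc_torsion B 3 // mod_lat"
    proof
      show "(\<lambda>C. ph ` C) ` (?T // mod_lat) \<subseteq> disc_torsion B 3 // mod_lat"
        using torsion_dsum[OF assms] by (force simp: quotient_def ph_class)
      show "disc_torsion B 3 // mod_lat \<subseteq> (\<lambda>C. ph ` C) ` (?T // mod_lat)"
      proof
        fix C assume "C \<in> disc_torsion B 3 // mod_lat"
        then obtain y where y: "y \<in> disc_torsion B 3" "C = mod_lat `` {y}" by (auto simp: quotient_def)
        have "vp 0 y \<in> ?T" using y torsion_dsum[OF assms, of "vp 0 y" B] by (simp add: lat_zero)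
        moreover have "C = ph ` (mod_lat `` {vp 0 y})" using y by (simp add: ph_class)
        ultimately show "C \<in> (\<lambda>C. ph ` C) ` (?T // mod_lat)" by (auto simp: quotient_def)
      qed
    qed
  qed
qed

lemma discr_dsum:
  assumes "discr_period2 A" "discr_condition B"
  shows "discr_condition (dsum A B)"
  unfolding discr_condition_def
proof
  show "\<forall>x\<in>dual_lat (dsum A B). 6 *\<^sub>R x \<in> lat"
  proof
    fix x assume "x \<in> dual_lat (dsum A B)"
    then have d: "pe x \<in> dual_lat A" "ph x \<in> dual_lat B" by (auto simp: dual_dsum)
    have "2 *\<^sub>R pe x \<in> lat" using assms(1) d by (simp add: discr_period2_def)
    then have "real_of_int 3 *\<^sub>R (2 *\<^sub>R pe x) \<in> lat" by (rule lat_int_scale)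
    then have "6 *\<^sub>R pe x \<in> lat" by (simp add: scaleR_scaleR)
    moreover have "6 *\<^sub>R ph x \<in> lat" using assms(2) d by (simp add: discr_condition_def)
    ultimately show "6 *\<^sub>R x \<in> lat" by (simp add: lat_iff pe_scaleR ph_scaleR)
  qed
  show "card (disc_torsion (dsum A B) 3 // mod_lat) = 3"
    using card_quot_dsum[OF assms(1), of B] assms(2) unfolding discr_condition_def by linarith
qed

lemma imat_transpose: "imat (transpose g) = transpose (imat g)"
  by (simp add: imat_def transpose_def vec_eq_iff)

lemma imat_one: "imat (mat 1) = mat 1"
  by (simp add: imat_def mat_def vec_eq_iff)

lemma aut_matrix:
  assumes "automorphism G g"
  shows "transpose g ** G ** g = G"
proof -
  have "(transpose g ** G ** g)$i$j = G$i$j" for i j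
  proof -
    have "(transpose g ** G ** g)$i$j = gbil (transpose g ** G ** g) (axis i 1) (axis j 1)"
      by (simp add: gbil_axis)
    also have "\<dots> = gbil G (g *v axis i 1) (g *v axis j 1)" by (simp add: gbil_mv)
    also have "\<dots> = bil G (g *v axis i 1) (g *v axis j 1)" by (simp add: bil_gbil)
    also have "\<dots> = bil G (axis i 1) (axis j 1)" using assms by (simp add: automorphism_def)
    also have "\<dots> = G$i$j" by (simp add: bil_gbil gbil_axis)
    finally show ?thesis .
  qed
  then show ?thesis by (simp add: vec_eq_iff)
qed

lemma aut_real:
  assumes "automorphism G g"
  shows "bil G (rmat g *v x) (rmat g *v y) = bil G x (y :: real^'n)"
proof -
  have "bil G (rmat g *v x) (rmat g *v y) = gbil (imat G) (imat g *v x) (imat g *v y)"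
    by (simp add: bil_gbil rmat_imat)
  also have "\<dots> = gbil (transpose (imat g) ** imat G ** imat g) x y" by (simp add: gbil_mv)
  also have "\<dots> = gbil (imat (transpose g ** G ** g)) x y" by (simp add: imat_mult imat_transpose)
  also have "\<dots> = bil G x y" using aut_matrix[OF assms] by (simp add: bil_gbil)
  finally show ?thesis .
qed

lemma aut_inv:
  assumes "automorphism G g" "h ** g = mat 1" "g ** h = mat 1"
  shows "automorphism G h"
  unfolding automorphism_def
proof
  show "\<exists>h'. h' ** h = mat 1 \<and> h ** h' = mat 1" using assms by blast
  show "\<forall>v w. bil G (h *v v) (h *v w) = bil G v w"
  proof (intro allI)
    fix v w
    have "bil G (h *v v) (h *v w) = bil G (g *v (h *v v)) (g *v (h *v w))"
      using assms(1) by (simp add: automorphism_def)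
    also have "\<dots> = bil G v w" using assms(3) by (simp add: matrix_vector_mul_assoc)
    finally show "bil G (h *v v) (h *v w) = bil G v w" .
  qed
qed

lemma dsum_mv_pe: "dsum (mat 1) g *v v = vp (pe v) (g *v ph v)"
  by (metis dsum_mv matrix_vector_mul_lid vp_pe_ph)

lemma aut_dsum:
  assumes "automorphism B g"
  shows "automorphism (dsum A B) (dsum (mat 1) g)"
proof -
  obtain h where h: "h ** g = mat 1" "g ** h = mat 1" using assms by (auto simp: automorphism_def)
  have "dsum (mat 1) h ** dsum (mat 1) g = mat 1" "dsum (mat 1) g ** dsum (mat 1) h = mat 1"
    using h by (simp_all add: dsum_mult dsum_one)
  moreover have "bil (dsum A B) (dsum (mat 1) g *v v) (dsum (mat 1) g *v w) = bil (dsum A B) v w" for v w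
    using assms by (simp add: dsum_mv_pe bil_dsum automorphism_def)
  ultimately show ?thesis unfolding automorphism_def by blast
qed

lemma rmat_dsum_pe: "rmat (dsum (mat 1) g) *v v = vp (pe v) (rmat g *v ph v)"
  by (metis rmat_dsum_mv rmat_imat imat_one matrix_vector_mul_lid vp_pe_ph)

lemma Z3_dsum:
  assumes "discr_period2 A" "Z3_reversing B g"
  shows "Z3_reversing (dsum A B) (dsum (mat 1) g)"
  unfolding Z3_reversing_def
proof
  fix x assume "x \<in> disc_torsion (dsum A B) 3"
  then have x: "pe x \<in> lat" "ph x \<in> disc_torsion B 3" using torsion_dsum[OF assms(1)] by auto
  have "rmat (dsum (mat 1) g) *v x + x = vp (pe x + pe x) (rmat g *v ph x + ph x)"
    by (metis rmat_dsum_pe vp_add vp_pe_ph)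
  moreover have "rmat g *v ph x + ph x \<in> lat" using assms(2) x by (simp add: Z3_reversing_def)
  moreover have "pe x + pe x \<in> lat" using x lat_add by blast
  ultimately show "rmat (dsum (mat 1) g) *v x + x \<in> lat" by (simp only: lat_vp)
qed

definition Sset :: "int^'n^'n \<Rightarrow> (real^'n) set" where
  "Sset G = negative_cone G - (\<Union>r\<in>roots G. {x. bil G x (rvec r) = 0})"

lemma cells_Sset: "cells_sharp G = components (Sset G)"
  by (simp add: cells_sharp_def Sset_def)

lemma Sset_iff: "x \<in> Sset G \<longleftrightarrow> bil G x x < 0 \<and> (\<forall>r\<in>roots G. bil G x (rvec r) \<noteq> 0)"
  by (auto simp: Sset_def negative_cone_def)

lemma aut_roots:
  assumes "automorphism G g" "h ** g = mat 1" "g ** h = mat 1" "r \<in> roots G"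
  shows "h *v r \<in> roots G"
proof -
  have ah: "automorphism G h" using aut_inv assms by blast
  have "bil G (h *v r) (h *v r) = bil G r r" using ah by (simp add: automorphism_def)
  moreover have "bil G (h *v r) w = bil G r (g *v w)" for w
  proof -
    have "bil G (h *v r) w = bil G (h *v r) (h *v (g *v w))"
      using assms(2) by (simp add: matrix_vector_mul_assoc)
    also have "\<dots> = bil G r (g *v w)" using ah by (simp add: automorphism_def)
    finally show ?thesis .
  qed
  ultimately show ?thesis using assms(4) by (auto simp: roots_def two_roots_def six_roots_def)
qed

lemma aut_S:
  assumes "automorphism G g" "x \<in> Sset G"
  shows "rmat g *v x \<in> Sset G"
proof -
  obtain h where h: "h ** g = mat 1" "g ** h = mat 1" using assms(1) by (auto simp: automorphism_def)
  have "bil G (rmat g *v x) (rmat g *v x) < 0" using assms by (simp add: aut_real Sset_iff)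
  moreover have "bil G (rmat g *v x) (rvec r) \<noteq> 0" if r: "r \<in> roots G" for r
  proof -
    have "rvec r = rmat g *v rvec (h *v r)"
      using h(2) by (simp add: rvec_mv[symmetric] matrix_vector_mul_assoc)
    then have "bil G (rmat g *v x) (rvec r) = bil G x (rvec (h *v r))"
      using assms(1) by (simp add: aut_real)
    moreover have "h *v r \<in> roots G" using aut_roots[OF assms(1) h r] .
    ultimately show ?thesis using assms(2) by (simp add: Sset_iff)
  qed
  ultimately show ?thesis by (simp add: Sset_iff)
qed

lemma mv_axis: "P *v axis b 1 = (\<chi> a. P$a$b)"
  by (simp add: matrix_vector_mult_def axis_def vec_eq_iff mult_delta_right sum.delta)

lemma bil_sum_left: "finite S \<Longrightarrow> bil G (\<Sum>i\<in>S. f i) z = (\<Sum>i\<in>S. bil G (f i) z)"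
  by (simp add: bil_gbil gbil_sum_left)

lemma axis_notin_span:
  fixes \<sigma> :: "nat \<Rightarrow> 'n::finite"
  assumes "inj_on \<sigma> {..k}"
  shows "axis (\<sigma> k) (1::real) \<notin> span ((\<lambda>j. axis (\<sigma> j) 1) ` {..<k})"
proof -
  have "subspace {x::real^'n. x $ \<sigma> k = 0}" by (auto simp: subspace_def)
  moreover have "(\<lambda>j. axis (\<sigma> j) (1::real)) ` {..<k} \<subseteq> {x. x $ \<sigma> k = 0}"
    using assms by (auto simp: axis_def inj_on_def) (metis atMost_iff less_imp_le_nat less_irrefl order_refl)
  ultimately have "span ((\<lambda>j. axis (\<sigma> j) (1::real)) ` {..<k}) \<subseteq> {x. x $ \<sigma> k = 0}"
    by (rule span_minimal[rotated])
  then show ?thesis by (auto simp: axis_def)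
qed

lemma gram_schmidt_step:
  fixes G :: "int^'n::finite^'n"
  assumes sym: "symmetric_gram G" and pd: "positive_definite G"
    and inj: "inj_on \<sigma> {..k}"
    and orth: "\<forall>i<k. \<forall>j<k. bil G (u i) (u j) = (if i = j then 1 else (0::real))"
    and sp: "\<forall>i<k. u i \<in> span ((\<lambda>j. axis (\<sigma> j) (1::real)) ` {..<k})"
  shows "\<exists>u'. (\<forall>i<Suc k. \<forall>j<Suc k. bil G (u' i) (u' j) = (if i = j then 1 else (0::real))) \<and>
     (\<forall>i<Suc k. u' i \<in> span ((\<lambda>j. axis (\<sigma> j) (1::real)) ` {..<Suc k}))"
proof -
  let ?E = "\<lambda>k. span ((\<lambda>j. axis (\<sigma> j) (1::real)) ` {..<k})"
  define e where "e = axis (\<sigma> k) (1::real)"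
  define w where "w = e - (\<Sum>i<k. bil G e (u i) *\<^sub>R u i)"
  have sub: "?E k \<subseteq> ?E (Suc k)" by (rule span_mono) auto
  have eS: "e \<in> ?E (Suc k)" unfolding e_def by (rule span_base) auto
  have sumE: "(\<Sum>i<k. bil G e (u i) *\<^sub>R u i) \<in> ?E k"
    using sp by (intro span_sum span_mul) auto
  have "w \<noteq> 0"
  proof
    assume "w = 0"
    then have "e = (\<Sum>i<k. bil G e (u i) *\<^sub>R u i)" by (simp add: w_def)
    then have "e \<in> ?E k" using sumE by simp
    then show False using axis_notin_span[OF inj] by (simp add: e_def)
  qed
  then have wpos: "bil G w w > 0" using pd by (simp add: positive_definite_def)
  have wS: "w \<in> ?E (Suc k)" unfolding w_def using eS sumE sub by (intro span_diff) auto
  have worth: "bil G w (u j) = 0" if "j < k" for j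
  proof -
    have "bil G w (u j) = bil G e (u j) - (\<Sum>i<k. bil G e (u i) * bil G (u i) (u j))"
      by (simp add: w_def bil_int_diff bil_sum_left bil_scaleR)
    also have "(\<Sum>i<k. bil G e (u i) * bil G (u i) (u j)) = (\<Sum>i<k. if i = j then bil G e (u j) else 0)"
      using orth that by (intro sum.cong) auto
    also have "\<dots> = bil G e (u j)" using that by simp
    finally show ?thesis by simp
  qed
  define c where "c = 1 / sqrt (bil G w w)"
  define u' where "u' = u(k := c *\<^sub>R w)"
  have nk: "bil G (u' k) (u' k) = 1"
  proof -
    have "bil G (u' k) (u' k) = c * c * bil G w w" by (simp add: u'_def bil_scaleR)
    also have "\<dots> = 1" using wpos by (simp add: c_def field_simps)
    finally show ?thesis .
  qed
  have ok: "bil G (u' k) (u' j) = 0" "bil G (u' j) (u' k) = 0" if "j < k" for j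
    using worth[OF that] that bil_int_sym[OF sym, of "u' j" "u' k"]
    by (auto simp: u'_def bil_scaleR)
  have "\<forall>i<Suc k. \<forall>j<Suc k. bil G (u' i) (u' j) = (if i = j then 1 else (0::real))"
  proof (intro allI impI)
    fix i j assume "i < Suc k" "j < Suc k"
    then consider "i < k" "j < k" | "i = k" "j < k" | "i < k" "j = k" | "i = k" "j = k" by linarith
    then show "bil G (u' i) (u' j) = (if i = j then 1 else 0)"
    proof cases
      case 1 then show ?thesis using orth by (simp add: u'_def)
    next
      case 2 then show ?thesis using ok by simp
    next
      case 3 then show ?thesis using ok by simp
    next
      case 4 then show ?thesis using nk by simp
    qed
  qed
  moreover have "\<forall>i<Suc k. u' i \<in> ?E (Suc k)"
    using sp sub wS by (auto simp: u'_def less_Suc_eq intro: span_mul)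
  ultimately show ?thesis by blast
qed

lemma gram_schmidt:
  fixes G :: "int^'n::finite^'n" and k :: nat
  assumes sym: "symmetric_gram G" and pd: "positive_definite G"
    and inj: "inj_on \<sigma> {..<n}"
  shows "k \<le> n \<Longrightarrow> \<exists>u. (\<forall>i<k. \<forall>j<k. bil G (u i) (u j) = (if i = j then 1 else (0::real))) \<and>
     (\<forall>i<k. u i \<in> span ((\<lambda>j. axis (\<sigma> j) (1::real)) ` {..<k}))"
proof (induct k)
  case 0 then show ?case by simp
next
  case (Suc k)
  then obtain u where "\<forall>i<k. \<forall>j<k. bil G (u i) (u j) = (if i = j then 1 else (0::real))"
     "\<forall>i<k. u i \<in> span ((\<lambda>j. axis (\<sigma> j) (1::real)) ` {..<k})" by auto
  moreover have "inj_on \<sigma> {..k}" using Suc(2) by (intro inj_on_subset[OF inj]) auto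
  ultimately show ?case using gram_schmidt_step[OF sym pd] by blast
qed

lemma posdef_diag:
  fixes G :: "int^'n::finite^'n"
  assumes sym: "symmetric_gram G" and pd: "positive_definite G"
  shows "\<exists>P::real^'n^'n. invertible P \<and> transpose P ** rmat G ** P = mat 1"
proof -
  obtain \<sigma> where bij: "bij_betw \<sigma> {0..<CARD('n)} (UNIV::'n set)"
    using ex_bij_betw_nat_finite[of "UNIV::'n set"] by auto
  then have inj: "inj_on \<sigma> {..<CARD('n)}" by (simp add: bij_betw_def atLeast0LessThan)
  obtain u where orth: "\<forall>i<CARD('n). \<forall>j<CARD('n). bil G (u i) (u j) = (if i = j then 1 else (0::real))"
    using gram_schmidt[OF sym pd inj, of "CARD('n)"] by auto
  define \<tau> where "\<tau> = inv_into {0..<CARD('n)} \<sigma>"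
  have \<tau>: "\<tau> a < CARD('n)" for a
    using bij unfolding \<tau>_def by (metis atLeastLessThan_iff bij_betw_def bij_betw_inv_into inv_into_into UNIV_I)
  have \<tau>inj: "\<tau> a = \<tau> b \<Longrightarrow> a = b" for a b
    using bij unfolding \<tau>_def by (metis bij_betw_inv_into_right UNIV_I)
  define P :: "real^'n^'n" where "P = (\<chi> a b. u (\<tau> b) $ a)"
  have col: "P *v axis b 1 = u (\<tau> b)" for b by (simp add: mv_axis P_def vec_eq_iff)
  have "(transpose P ** rmat G ** P)$a$b = (mat 1 :: real^'n^'n)$a$b" for a b
  proof -
    have "(transpose P ** rmat G ** P)$a$b = gbil (transpose P ** imat G ** P) (axis a 1) (axis b 1)"
      by (simp add: gbil_axis rmat_imat)
    also have "\<dots> = bil G (u (\<tau> a)) (u (\<tau> b))" by (simp add: gbil_mv[symmetric] col bil_gbil)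
    also have "\<dots> = (mat 1 :: real^'n^'n)$a$b" using orth \<tau> \<tau>inj by (auto simp: mat_def)
    finally show ?thesis .
  qed
  then have eq: "transpose P ** rmat G ** P = mat 1" by (simp add: vec_eq_iff)
  then have "(transpose P ** rmat G) ** P = mat 1" by (simp add: matrix_mul_assoc)
  then have "invertible P" using invertible_left_inverse by blast
  with eq show ?thesis by blast
qed

lemma hyp_dsum:
  fixes Ge :: "int^'e::finite^'e" and Gh :: "int^'h::finite^'h"
  assumes "symmetric_gram Ge" "positive_definite Ge" "hyperbolic_signature Gh"
  shows "hyperbolic_signature (dsum Ge Gh)"
proof -
  obtain Pe :: "real^'e^'e" where Pe: "invertible Pe" "transpose Pe ** rmat Ge ** Pe = mat 1"
    using posdef_diag[OF assms(1,2)] by blast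
  obtain Ph :: "real^'h^'h" and k where Ph: "invertible Ph"
    "transpose Ph ** rmat Gh ** Ph = (\<chi> i j. if i = j then (if i = k then -1 else 1) else 0)"
    using assms(3) by (auto simp: hyperbolic_signature_def)
  obtain Qe where Qe: "Qe ** Pe = mat 1" using Pe(1) invertible_left_inverse by blast
  obtain Qh where Qh: "Qh ** Ph = mat 1" using Ph(1) invertible_left_inverse by blast
  define P where "P = bdsum Pe Ph"
  have "bdsum Qe Qh ** P = mat 1" using Qe Qh by (simp add: P_def bdsum_mult bdsum_one)
  then have inv: "invertible P" using invertible_left_inverse by blast
  have "transpose P ** rmat (dsum Ge Gh) ** P =
        bdsum (transpose Pe ** rmat Ge ** Pe) (transpose Ph ** rmat Gh ** Ph)"
    by (simp add: P_def rmat_imat imat_dsum transpose_bdsum bdsum_mult)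
  also have "\<dots> = (\<chi> i j. if i = j then (if i = Inr k then -1 else 1) else 0)"
    using Pe(2) Ph(2) by (simp add: vec_eq_iff all_sum_iff mat_def)
  finally show ?thesis using inv unfolding hyperbolic_signature_def by blast
qed

lemma key_ineq:
  fixes p q t A B :: real
  assumes p: "p \<ge> 0" and q: "q \<ge> 0" and t: "\<bar>t\<bar> \<le> p * q" and pA: "p\<^sup>2 < A\<^sup>2"
    and nz: "q > 0 \<or> B \<noteq> 0"
  shows "(q\<^sup>2 - B\<^sup>2) * (p\<^sup>2 - A\<^sup>2) < 2 * (t - A * B)\<^sup>2"
proof (cases "q\<^sup>2 \<ge> B\<^sup>2")
  case True
  have pa: "p < \<bar>A\<bar>" using pA p by (metis abs_of_nonneg power2_less_imp_less abs_ge_zero power2_abs)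
  show ?thesis
  proof (cases "q\<^sup>2 = B\<^sup>2")
    case True
    then have qB: "q = \<bar>B\<bar>" using q by (metis abs_of_nonneg power2_abs power2_eq_iff_nonneg abs_ge_zero)
    have "t \<noteq> A * B"
    proof
      assume "t = A * B"
      then have "\<bar>A\<bar> * \<bar>B\<bar> \<le> p * \<bar>B\<bar>" using t qB by (simp add: abs_mult)
      moreover have "\<bar>B\<bar> > 0" using nz qB by auto
      ultimately have "\<bar>A\<bar> \<le> p" by simp
      then show False using pa by simp
    qed
    then have "(t - A * B)\<^sup>2 > 0" by simp
    then show ?thesis using True by simp
  next
    case False
    then have "q\<^sup>2 - B\<^sup>2 > 0" using \<open>q\<^sup>2 \<ge> B\<^sup>2\<close> by simp
    moreover have "p\<^sup>2 - A\<^sup>2 < 0" using pA by simp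
    ultimately have "(q\<^sup>2 - B\<^sup>2) * (p\<^sup>2 - A\<^sup>2) < 0" by (simp add: mult_pos_neg)
    then show ?thesis by (smt (verit) zero_le_power2)
  qed
next
  case False
  have pa: "p < \<bar>A\<bar>" using pA p by (metis abs_of_nonneg power2_less_imp_less abs_ge_zero power2_abs)
  have qb: "q < \<bar>B\<bar>" using False q by (metis abs_of_nonneg power2_less_imp_less abs_ge_zero power2_abs not_le)
  define X where "X = \<bar>A\<bar> * \<bar>B\<bar> - p * q"
  have "p * q < \<bar>A\<bar> * \<bar>B\<bar>" using pa qb p q by (meson le_less_trans mult_le_less_imp_less abs_ge_zero less_le_not_le order.strict_trans2 mult_strict_mono)
  then have X0: "X > 0" by (simp add: X_def)
  have "X\<^sup>2 - (A\<^sup>2 - p\<^sup>2) * (B\<^sup>2 - q\<^sup>2) = (\<bar>A\<bar> * q - \<bar>B\<bar> * p)\<^sup>2"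
    by (simp add: X_def power2_eq_square algebra_simps)
  then have X2: "X\<^sup>2 \<ge> (A\<^sup>2 - p\<^sup>2) * (B\<^sup>2 - q\<^sup>2)" by (smt (verit) zero_le_power2)
  have "\<bar>t - A * B\<bar> \<ge> X" using t by (simp add: X_def abs_mult)
  then have "(t - A * B)\<^sup>2 \<ge> X\<^sup>2" using X0 by (metis abs_ge_zero order_less_imp_le power2_abs power_mono)
  moreover have "(A\<^sup>2 - p\<^sup>2) * (B\<^sup>2 - q\<^sup>2) > 0" using pA False by simp
  ultimately show ?thesis using X2 by (simp add: algebra_simps)
qed

definition spc :: "'n \<Rightarrow> real^'n::finite \<Rightarrow> real^'n" where
  "spc k a = (\<chi> i. if i = k then 0 else a$i)"

lemma sum_diag: "(\<Sum>j\<in>UNIV. x * (if (i::'n::finite) = j then c j else 0) * y j) = x * c i * (y i :: 'a::comm_ring_1)"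
proof -
  have "(\<Sum>j\<in>UNIV. x * (if i = j then c j else 0) * y j) = (\<Sum>j\<in>UNIV. if j = i then x * c j * y j else 0)"
    by (intro sum.cong) auto
  also have "\<dots> = x * c i * y i" by (subst sum.delta) simp_all
  finally show ?thesis .
qed

lemma gbil_J:
  "gbil ((\<chi> i j. if i = j then (if i = k then -1 else 1) else 0) :: real^'n::finite^'n) a b
     = spc k a \<bullet> spc k b - a$k * b$k"
proof -
  have "gbil ((\<chi> i j. if i = j then (if i = k then -1 else 1) else 0) :: real^'n^'n) a b
      = (\<Sum>i\<in>UNIV. a$i * (if i = k then -1 else 1) * b$i)"
    unfolding gbil_def by (intro sum.cong refl) (simp only: vec_lambda_beta sum_diag)
  also have "\<dots> = (\<Sum>i\<in>UNIV. spc k a $ i * spc k b $ i - (if i = k then a$i * b$i else 0))"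
    by (intro sum.cong refl) (simp add: spc_def)
  also have "\<dots> = spc k a \<bullet> spc k b - a$k * b$k"
    by (simp add: sum_subtractf inner_vec_def)
  finally show ?thesis .
qed

lemma Qpos:
  fixes G :: "int^'n::finite^'n" and y z :: "real^'n"
  assumes hyp: "hyperbolic_signature G" and y: "bil G y y < 0" and z: "z \<noteq> 0"
  shows "bil G z z * bil G y y < 2 * (bil G y z)\<^sup>2"
proof -
  obtain P :: "real^'n^'n" and k where P: "invertible P"
    "transpose P ** rmat G ** P = (\<chi> i j. if i = j then (if i = k then -1 else 1) else 0)"
    using hyp by (auto simp: hyperbolic_signature_def)
  obtain Q where Q: "P ** Q = mat 1" using P(1) invertible_right_inverse by blast
  define a where "a = Q *v y"
  define b where "b = Q *v z"
  have ya: "y = P *v a" and zb: "z = P *v b" using Q by (simp_all add: a_def b_def matrix_vector_mul_assoc)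
  have B: "bil G (P *v u) (P *v v) = spc k u \<bullet> spc k v - u$k * v$k" for u v
    using P(2) by (simp add: bil_gbil gbil_mv rmat_imat[symmetric] gbil_J)
  define p where "p = norm (spc k a)"
  define q where "q = norm (spc k b)"
  define t where "t = spc k a \<bullet> spc k b"
  have p2: "spc k a \<bullet> spc k a = p\<^sup>2" by (simp add: p_def power2_norm_eq_inner)
  have q2: "spc k b \<bullet> spc k b = q\<^sup>2" by (simp add: q_def power2_norm_eq_inner)
  have yy: "bil G y y = p\<^sup>2 - (a$k)\<^sup>2" using B[of a a] p2 ya by (simp add: power2_eq_square)
  have zz: "bil G z z = q\<^sup>2 - (b$k)\<^sup>2" using B[of b b] q2 zb by (simp add: power2_eq_square)
  have yz: "bil G y z = t - a$k * b$k" using B[of a b] ya zb by (simp add: t_def)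
  have "b \<noteq> 0" using z zb by auto
  have nz: "q > 0 \<or> b$k \<noteq> 0"
  proof (rule ccontr)
    assume "\<not> (q > 0 \<or> b$k \<noteq> 0)"
    then have "spc k b = 0" "b$k = 0" using q_def by auto
    then have "b$i = 0" for i
      by (cases "i = k") (auto simp: spc_def vec_eq_iff dest: spec[of _ i])
    then have "b = 0" by (simp add: vec_eq_iff)
    then show False using \<open>b \<noteq> 0\<close> by simp
  qed
  have "\<bar>t\<bar> \<le> p * q" by (simp add: t_def p_def q_def Cauchy_Schwarz_ineq2)
  moreover have "p\<^sup>2 < (a$k)\<^sup>2" using y yy by simp
  ultimately have "(q\<^sup>2 - (b$k)\<^sup>2) * (p\<^sup>2 - (a$k)\<^sup>2) < 2 * (t - a$k * b$k)\<^sup>2"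
    using key_ineq[of p q t "a$k" "b$k"] nz by (simp add: p_def q_def)
  then show ?thesis using yy zz yz by simp
qed

lemma finite_ints: "finite {r::int^'n::finite. norm (rvec r) \<le> R}"
proof -
  define N where "N = \<lceil>R\<rceil>"
  have "{r::int^'n. norm (rvec r) \<le> R} \<subseteq> vec_lambda ` (PiE UNIV (\<lambda>_. {-N..N}))"
  proof
    fix r :: "int^'n" assume "r \<in> {r. norm (rvec r) \<le> R}"
    then have bnd: "\<bar>real_of_int (r$i)\<bar> \<le> R" for i
      using component_le_norm_cart[of "rvec r" i] by (simp add: rvec_def)
    have "r$i \<in> {-N..N}" for i
    proof -
      have a: "real_of_int (r$i) \<le> R" "real_of_int (- r$i) \<le> R" using bnd[of i] by auto
      have "R \<le> real_of_int N" unfolding N_def by (rule le_of_int_ceiling)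
      then have "real_of_int (r$i) \<le> real_of_int N" "real_of_int (- r$i) \<le> real_of_int N" using a by linarith+
      then have "r$i \<le> N" "- r$i \<le> N" by (simp_all only: of_int_le_iff)
      then show ?thesis by simp
    qed
    then have "vec_nth r \<in> PiE UNIV (\<lambda>_. {-N..N})" by auto
    then show "r \<in> vec_lambda ` (PiE UNIV (\<lambda>_. {-N..N}))" by (metis image_eqI vec_nth_inverse)
  qed
  moreover have "finite (vec_lambda ` (PiE (UNIV::'n set) (\<lambda>_. {-N..N})))"
    by (intro finite_imageI finite_PiE) auto
  ultimately show ?thesis by (rule finite_subset)
qed

lemma cont_bil: "continuous_on S f \<Longrightarrow> continuous_on S g \<Longrightarrow> continuous_on S (\<lambda>x. bil G (f x) (g x :: real^'n::finite))"
  unfolding bil_def by (intro continuous_intros)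

lemma Qpos_div:
  fixes G :: "int^'n::finite^'n" and y z :: "real^'n"
  assumes "hyperbolic_signature G" "bil G y y < 0" "z \<noteq> 0"
  shows "bil G z z - 2 * (bil G y z)\<^sup>2 / bil G y y > 0"
proof -
  have "bil G z z * bil G y y < 2 * (bil G y z)\<^sup>2" using Qpos[OF assms] .
  then have "2 * (bil G y z)\<^sup>2 / bil G y y < bil G z z" using assms(2) by (simp add: neg_divide_less_eq)
  then show ?thesis by simp
qed

lemma finite_local:
  fixes G :: "int^'n::finite^'n" and C :: "(real^'n) set"
  assumes hyp: "hyperbolic_signature G" and C: "compact C" and neg: "\<forall>y\<in>C. bil G y y < 0"
    and M: "M \<ge> 0"
  shows "finite {r. \<bar>bil G (rvec r) (rvec r)\<bar> \<le> M \<and> (\<exists>y\<in>C. \<bar>bil G y (rvec r)\<bar> \<le> M)}"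
proof (cases "C = {}")
  case True then show ?thesis by simp
next
  case False
  have cC: "continuous_on C (\<lambda>y. bil G y y)" by (intro cont_bil continuous_on_id)
  obtain y0 where y0: "y0 \<in> C" "\<forall>y\<in>C. bil G y y \<le> bil G y0 y0"
    using continuous_attains_sup[OF C False cC] by auto
  define m where "m = - bil G y0 y0"
  have m: "m > 0" "\<forall>y\<in>C. m \<le> - bil G y y" using y0 neg by (auto simp: m_def)
  define K where "K = C \<times> sphere (0::real^'n) 1"
  define Qf where "Qf = (\<lambda>p::(real^'n) \<times> (real^'n). bil G (snd p) (snd p) - 2 * (bil G (fst p) (snd p))\<^sup>2 / bil G (fst p) (fst p))"
  have Kc: "compact K" unfolding K_def by (intro compact_Times C compact_sphere)
  obtain i0 :: 'n where True by blast
  have "(y0, axis i0 1) \<in> K" using y0 by (simp add: K_def)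
  then have Kne: "K \<noteq> {}" by auto
  have cQ: "continuous_on K Qf"
    unfolding Qf_def
  proof (intro continuous_intros cont_bil continuous_on_fst continuous_on_snd continuous_on_id)
    show "\<forall>p\<in>K. bil G (fst p) (fst p) \<noteq> 0" using neg by (auto simp: K_def)
  qed
  obtain p0 where p0: "p0 \<in> K" "\<forall>p\<in>K. Qf p0 \<le> Qf p"
    using continuous_attains_inf[OF Kc Kne cQ] by auto
  define c where "c = Qf p0"
  have Qf_pos: "Qf p > 0" if "p \<in> K" for p
  proof -
    have "snd p \<noteq> 0" "bil G (fst p) (fst p) < 0" using that neg by (auto simp: K_def)
    then show ?thesis unfolding Qf_def using Qpos_div[OF hyp] by blast
  qed
  have c: "c > 0" "\<forall>p\<in>K. c \<le> Qf p" using p0 Qf_pos by (auto simp: c_def)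
  define Rb where "Rb = max 1 ((M + 2 * M\<^sup>2 / m) / c)"
  have "{r. \<bar>bil G (rvec r) (rvec r)\<bar> \<le> M \<and> (\<exists>y\<in>C. \<bar>bil G y (rvec r)\<bar> \<le> M)} \<subseteq> {r. norm (rvec r) \<le> Rb}"
  proof (clarify)
    fix r y assume r1: "\<bar>bil G (rvec r) (rvec r)\<bar> \<le> M" and y: "y \<in> C" and r2: "\<bar>bil G y (rvec r)\<bar> \<le> M"
    show "norm (rvec r) \<le> Rb"
    proof (cases "rvec r = 0")
      case True then show ?thesis by (simp add: Rb_def)
    next
      case False
      define x where "x = rvec r"
      define n where "n = norm x"
      have n: "n > 0" using False by (simp add: n_def x_def)
      define z where "z = (1 / n) *\<^sub>R x"
      have "norm z = 1" using n by (simp add: z_def n_def)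
      then have yz: "(y, z) \<in> K" using y by (simp add: K_def)
      have Y: "bil G y y < 0" "m \<le> - bil G y y" using y neg m by auto
      have qe: "Qf (y, z) = Qf (y, x) / n\<^sup>2"
        using n by (simp add: Qf_def z_def bil_scaleR power2_eq_square field_simps)
      have "c \<le> Qf (y, z)" using c(2) yz by blast
      then have "c \<le> Qf (y, x) / n\<^sup>2" by (simp only: qe)
      then have cn: "c * n\<^sup>2 \<le> Qf (y, x)" using n by (simp add: pos_le_divide_eq)
      have b2: "(bil G y x)\<^sup>2 \<le> M\<^sup>2" using r2 unfolding x_def by (metis abs_ge_zero power2_abs power_mono)
      have "- (2 * (bil G y x)\<^sup>2 / bil G y y) = 2 * (bil G y x)\<^sup>2 / (- bil G y y)" by simp
      also have "\<dots> \<le> 2 * M\<^sup>2 / (- bil G y y)" using b2 Y by (intro divide_right_mono) auto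
      also have "\<dots> \<le> 2 * M\<^sup>2 / m" using Y m by (intro divide_left_mono) (auto simp: mult_neg_pos)
      finally have "Qf (y, x) \<le> M + 2 * M\<^sup>2 / m" using r1 by (simp add: Qf_def x_def)
      then have "c * n\<^sup>2 \<le> M + 2 * M\<^sup>2 / m" using cn by simp
      then have "n\<^sup>2 \<le> (M + 2 * M\<^sup>2 / m) / c" using c by (simp add: pos_le_divide_eq mult.commute)
      then have n2: "n\<^sup>2 \<le> Rb" by (simp add: Rb_def)
      show ?thesis
      proof (cases "n \<le> 1")
        case True then show ?thesis by (simp add: Rb_def n_def x_def)
      next
        case False
        then have "n \<le> n\<^sup>2" by (simp add: power2_eq_square)
        then show ?thesis using n2 by (simp add: n_def x_def)
      qed
    qed
  qed
  then show ?thesis using finite_ints finite_subset by blast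
qed

lemma open_cone: "open {x::real^'n::finite. bil G x x < 0}"
  by (intro open_Collect_less cont_bil continuous_on_id continuous_on_const)

lemma closed_mirror: "closed {x::real^'n::finite. bil G x v = 0}"
  by (intro closed_Collect_eq cont_bil continuous_on_id continuous_on_const)

lemma roots_bound: "r \<in> roots G \<Longrightarrow> \<bar>real_of_int (bil G r r)\<bar> \<le> 6"
  by (auto simp: roots_def two_roots_def six_roots_def)

lemma open_Sset:
  fixes G :: "int^'n::finite^'n"
  assumes hyp: "hyperbolic_signature G"
  shows "open (Sset G)"
proof (rule Topological_Spaces.openI)
  fix y assume yS: "y \<in> Sset G"
  then have "y \<in> {x. bil G x x < 0}" by (simp add: Sset_iff)
  then obtain e where e: "e > 0" "cball y e \<subseteq> {x. bil G x x < 0}"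
    using open_cone[of G] open_contains_cball by blast
  define F where "F = {r. \<bar>bil G (rvec r) (rvec r)\<bar> \<le> 6 \<and> (\<exists>y'\<in>cball y e. \<bar>bil G y' (rvec r)\<bar> \<le> 6)}"
  have fF: "finite F" unfolding F_def
    using e by (intro finite_local[OF hyp]) auto
  define T where "T = ball y e - (\<Union>r\<in>F \<inter> roots G. {x. bil G x (rvec r) = 0})"
  have "open T" unfolding T_def using fF closed_mirror
    by (intro open_Diff open_ball closed_UN) auto
  moreover have "y \<in> T" using yS e unfolding T_def Sset_iff by auto
  moreover have "T \<subseteq> Sset G"
  proof
    fix x assume x: "x \<in> T"
    then have xc: "x \<in> cball y e" by (auto simp: T_def)
    then have "bil G x x < 0" using e by auto
    moreover have "bil G x (rvec r) \<noteq> 0" if r: "r \<in> roots G" for r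
    proof (cases "r \<in> F")
      case True then show ?thesis using x r by (auto simp: T_def)
    next
      case False
      have "\<bar>bil G (rvec r) (rvec r)\<bar> \<le> 6" using roots_bound[OF r] by (simp add: bil_rvec)
      then have "\<not> (\<exists>y'\<in>cball y e. \<bar>bil G y' (rvec r)\<bar> \<le> 6)" using False unfolding F_def by blast
      then have "\<bar>bil G x (rvec r)\<bar> > 6" using xc by (meson not_le)
      then show ?thesis by auto
    qed
    ultimately show "x \<in> Sset G" by (simp add: Sset_iff)
  qed
  ultimately show "\<exists>T. open T \<and> y \<in> T \<and> T \<subseteq> Sset G" by blast
qed

lemma posdef_finite:
  fixes G :: "int^'n::finite^'n"
  assumes pd: "positive_definite G"
  shows "finite {r. bil G (rvec r) (rvec r) \<le> M}"
proof -
  obtain i0 :: 'n where True by blast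
  have ne: "sphere (0::real^'n) 1 \<noteq> {}" using norm_axis_1[of i0] by (metis mem_sphere_0 empty_iff)
  have cc: "continuous_on (sphere (0::real^'n) 1) (\<lambda>z. bil G z z)" by (intro cont_bil continuous_on_id)
  obtain z0 where z0: "z0 \<in> sphere (0::real^'n) 1" "\<forall>z\<in>sphere 0 1. bil G z0 z0 \<le> bil G z z"
    using continuous_attains_inf[OF compact_sphere ne cc] by auto
  define c where "c = bil G z0 z0"
  have "z0 \<noteq> 0" using z0(1) by auto
  then have c: "c > 0" using pd by (auto simp: c_def positive_definite_def)
  define Rb where "Rb = max 1 (M / c)"
  have "{r. bil G (rvec r) (rvec r) \<le> M} \<subseteq> {r. norm (rvec r) \<le> Rb}"
  proof clarify
    fix r assume r: "bil G (rvec r) (rvec r) \<le> M"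
    show "norm (rvec r) \<le> Rb"
    proof (cases "rvec r = 0")
      case True then show ?thesis by (simp add: Rb_def)
    next
      case False
      define x where "x = rvec r"
      define n where "n = norm x"
      have n: "n > 0" using False by (simp add: n_def x_def)
      define z where "z = (1 / n) *\<^sub>R x"
      have "norm z = 1" using n by (simp add: z_def n_def)
      then have "c \<le> bil G z z" using z0 by (simp add: c_def)
      moreover have "bil G z z = bil G x x / n\<^sup>2" by (simp add: z_def bil_scaleR power2_eq_square)
      ultimately have "c * n\<^sup>2 \<le> bil G x x" using n by (simp add: pos_le_divide_eq)
      then have "c * n\<^sup>2 \<le> M" using r by (simp add: x_def)
      then have "n\<^sup>2 \<le> M / c" using c by (simp add: pos_le_divide_eq mult.commute)
      then have n2: "n\<^sup>2 \<le> Rb" by (simp add: Rb_def)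
      show ?thesis
      proof (cases "n \<le> 1")
        case True then show ?thesis by (simp add: Rb_def n_def x_def)
      next
        case False
        then have "n \<le> n\<^sup>2" by (simp add: power2_eq_square)
        then show ?thesis using n2 by (simp add: n_def x_def)
      qed
    qed
  qed
  then show ?thesis using finite_ints finite_subset by blast
qed

lemma cs_posdef:
  fixes G :: "int^'n::finite^'n" and v w :: "real^'n"
  assumes sym: "symmetric_gram G" and pd: "positive_definite G"
  shows "(bil G v w)\<^sup>2 \<le> bil G v v * bil G w w"
proof (cases "w = 0")
  case True then show ?thesis by simp
next
  case False
  define a where "a = bil G v w"
  define b where "b = bil G w w"
  have b: "b > 0" using False pd by (simp add: b_def positive_definite_def)
  have "0 \<le> bil G (v - (a / b) *\<^sub>R w) (v - (a / b) *\<^sub>R w)"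
    using pd by (cases "v - (a / b) *\<^sub>R w = 0") (auto simp: positive_definite_def less_imp_le)
  also have "\<dots> = bil G v v - 2 * (a / b) * a + (a / b) * (a / b) * b"
    using bil_int_sym[OF sym, of w v]
    by (simp add: bil_int_diff bil_scaleR a_def b_def algebra_simps)
  also have "\<dots> = bil G v v - a\<^sup>2 / b" using b by (simp add: field_simps power2_eq_square)
  finally have "a\<^sup>2 / b \<le> bil G v v" by simp
  then show ?thesis using b by (simp add: a_def b_def pos_divide_le_eq)
qed

lemma interior_finite_Union:
  "finite F \<Longrightarrow> (\<forall>a\<in>F. closed (H a) \<and> interior (H a) = {}) \<Longrightarrow> interior (\<Union>a\<in>F. H a) = {}"
proof (induct F rule: finite_induct)
  case empty then show ?case by simp
next
  case (insert a F)
  then have "interior (H a \<union> (\<Union>a\<in>F. H a)) = interior (H a)"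
    by (intro interior_closed_Un_empty_interior) auto
  then show ?case using insert by simp
qed

lemma bil_inner: "bil G x y = (rmat G *v y) \<bullet> (x :: real^'n::finite)"
  by (simp add: bil_def inner_vec_def matrix_vector_mult_def rmat_def sum_distrib_left mult_ac)

lemma avoid_hyperplanes:
  fixes G :: "int^'n::finite^'n"
  assumes pd: "positive_definite G" and fin: "finite F" and nz: "\<forall>r\<in>F. r \<noteq> 0"
  shows "\<exists>v::real^'n. \<forall>r\<in>F. bil G v (rvec r) \<noteq> 0"
proof -
  have "interior (\<Union>r\<in>F. {x::real^'n. bil G x (rvec r) = 0}) = {}"
  proof (rule interior_finite_Union[OF fin], intro ballI conjI)
    fix r assume r: "r \<in> F"
    show "closed {x::real^'n. bil G x (rvec r) = 0}" by (rule closed_mirror)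
    have "rvec r \<noteq> 0" using nz r by (metis rvec_inj rvec_zero)
    then have "bil G (rvec r) (rvec r) > 0" using pd by (simp add: positive_definite_def)
    then have w: "rmat G *v rvec r \<noteq> 0" by (auto simp: bil_inner)
    have "{x::real^'n. bil G x (rvec r) = 0} = {x. (rmat G *v rvec r) \<bullet> x = 0}" by (simp add: bil_inner)
    then show "interior {x::real^'n. bil G x (rvec r) = 0} = {}" using w by simp
  qed
  then have "(\<Union>r\<in>F. {x::real^'n. bil G x (rvec r) = 0}) \<noteq> UNIV" by auto
  then show ?thesis by auto
qed


lemma cont_vp: "continuous_on S (\<lambda>y. vp x (y::real^'h::finite) :: real^('e::finite+'h))"
  unfolding vp_def
proof (rule continuous_on_vec_lambda)
  fix i :: "'e+'h"
  show "continuous_on S (\<lambda>y. case i of Inl a \<Rightarrow> x $ a | Inr b \<Rightarrow> y $ b)"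
    by (cases i) (simp_all add: continuous_on_const continuous_on_component continuous_on_id)
qed

lemma mixed_root_neg:
  fixes Ge :: "int^'e::finite^'e" and Gh :: "int^'h::finite^'h"
  assumes pd: "positive_definite Ge" and ev: "even_lattice Ge" and per: "discr_period2 Ge"
    and r: "r \<in> roots (dsum Ge Gh)" and re: "pe r \<noteq> 0"
  shows "bil Gh (ph r) (ph r) \<le> 0"
proof -
  define E where "E = bil Ge (pe r) (pe r)"
  have "rvec (pe r) \<noteq> 0" using re by (metis rvec_inj rvec_zero)
  then have "bil Ge (rvec (pe r)) (rvec (pe r)) > 0" using pd unfolding positive_definite_def by blast
  then have "real_of_int E > 0" by (simp add: E_def bil_rvec)
  then have E0: "E > 0" by simp
  have "even E" using ev by (simp add: even_lattice_def E_def)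
  then have E2: "E \<ge> 2" using E0 by presburger
  have rr: "bil (dsum Ge Gh) r r = E + bil Gh (ph r) (ph r)" by (simp add: bil_dsum E_def)
  show ?thesis
  proof (cases "r \<in> two_roots (dsum Ge Gh)")
    case True
    then show ?thesis using rr E2 by (simp add: two_roots_def)
  next
    case False
    then have six: "bil (dsum Ge Gh) r r = 6" "\<forall>w. 3 dvd bil (dsum Ge Gh) r w"
      using r by (auto simp: roots_def six_roots_def)
    have d3: "3 dvd bil Ge (pe r) u" for u
      using six(2)[rule_format, of "vp u 0"] by (simp add: bil_dsum)
    define x where "x = (1/3) *\<^sub>R rvec (pe r)"
    have "x \<in> dual_lat Ge"
      unfolding dual_lat_def
    proof (clarify)
      fix u
      obtain k where k: "bil Ge (pe r) u = 3 * k" using d3[of u] by (auto elim: dvdE)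
      have "bil Ge x (rvec u) = real_of_int k" by (simp add: x_def bil_scaleR bil_rvec k)
      then show "bil Ge x (rvec u) \<in> \<int>" by simp
    qed
    then have "2 *\<^sub>R x \<in> lat" using per by (simp add: discr_period2_def)
    then obtain z where z: "2 *\<^sub>R x = rvec z" by (auto simp: lat_def)
    have "2 * (pe r $ i) = 3 * z $ i" for i
    proof -
      have "(2/3) * real_of_int (pe r $ i) = real_of_int (z $ i)"
        using arg_cong[OF z, of "\<lambda>v. v $ i"] by (simp add: x_def rvec_def)
      then have "real_of_int (2 * (pe r $ i)) = real_of_int (3 * z $ i)" by simp
      then show ?thesis by (simp only: of_int_eq_iff)
    qed
    then have "2 *s pe r = 3 *s z" by (simp add: vec_eq_iff)
    then have "bil Ge (2 *s pe r) (2 *s pe r) = bil Ge (3 *s z) (3 *s z)" by simp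
    then have "4 * E = 9 * bil Ge z z" by (simp add: bil_smult E_def)
    then have "9 dvd 4 * E" by simp
    then have "9 dvd E" by presburger
    then have "E \<ge> 9" using E0 by (simp add: zdvd_imp_le)
    then show ?thesis using rr six(1) by simp
  qed
qed

lemma point_in_S:
  fixes Ge :: "int^'e::finite^'e" and Gh :: "int^'h::finite^'h"
    and v :: "real^'e" and C :: "(real^'h) set" and y :: "real^'h"
  assumes sym: "symmetric_gram Ge" and pd: "positive_definite Ge" and ev: "even_lattice Ge"
    and per: "discr_period2 Ge" and hyp: "hyperbolic_signature Gh"
    and CS: "C \<subseteq> Sset Gh"
    and vF: "\<forall>re. re \<noteq> 0 \<and> bil Ge re re \<le> 6 \<longrightarrow> bil Ge v (rvec re) \<noteq> 0"
    and m: "m > 0" "\<forall>y\<in>C. m \<le> - bil Gh y y"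
    and mu: "\<mu> > 0" "\<forall>rh. (\<bar>bil Gh (rvec rh) (rvec rh)\<bar> \<le> 6 \<and> (\<exists>y\<in>C. \<bar>bil Gh y (rvec rh)\<bar> \<le> 6))
               \<and> rh \<noteq> 0 \<and> bil Gh rh rh \<le> 0 \<longrightarrow> (\<forall>y\<in>C. \<mu> \<le> \<bar>bil Gh y (rvec rh)\<bar>)"
    and d: "\<delta> > 0" "\<delta>\<^sup>2 * bil Ge v v \<le> t" "t \<le> m / 4" "t \<le> 1" "13 * t \<le> \<mu>\<^sup>2"
    and y: "y \<in> C"
  shows "vp (\<delta> *\<^sub>R v) y \<in> Sset (dsum Ge Gh)"
proof -
  let ?G = "dsum Ge Gh"
  let ?p = "vp (\<delta> *\<^sub>R v) y"
  have Bv: "bil Ge v v \<ge> 0" using pd by (cases "v = 0") (auto simp: positive_definite_def less_imp_le)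
  have Y: "m \<le> - bil Gh y y" using m y by auto
  have yS: "y \<in> Sset Gh" using CS y by auto
  have t0: "t \<ge> 0" using d Bv by (smt (verit) zero_le_power2 mult_nonneg_nonneg)
  have "bil ?G ?p ?p = \<delta>\<^sup>2 * bil Ge v v + bil Gh y y"
    by (simp add: bil_dsum bil_scaleR power2_eq_square)
  also have "\<dots> < 0" using d Y m by linarith
  finally have neg: "bil ?G ?p ?p < 0" .
  have nm: "bil ?G ?p (rvec r) \<noteq> 0" if r: "r \<in> roots ?G" for r
  proof
    assume eq0: "bil ?G ?p (rvec r) = 0"
    define re where "re = pe r"
    define rh where "rh = ph r"
    define \<alpha> where "\<alpha> = bil Ge v (rvec re)"
    define \<beta> where "\<beta> = bil Gh y (rvec rh)"
    have eq: "\<delta> * \<alpha> + \<beta> = 0" using eq0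
      by (simp add: bil_dsum bil_scaleR rvec_pe rvec_ph \<alpha>_def \<beta>_def re_def rh_def)
    have rr: "bil ?G r r = bil Ge re re + bil Gh rh rh" by (simp add: bil_dsum re_def rh_def)
    have r26: "bil ?G r r = 2 \<or> bil ?G r r = 6" using r by (auto simp: roots_def two_roots_def six_roots_def)
    consider "rh = 0" | "re = 0" "rh \<noteq> 0" | "re \<noteq> 0" "rh \<noteq> 0" by blast
    then show False
    proof cases
      case 1
      then have "bil Ge re re = 2 \<or> bil Ge re re = 6" using rr r26 by simp
      then have "re \<noteq> 0" "bil Ge re re \<le> 6" by auto
      then have "\<alpha> \<noteq> 0" using vF by (simp add: \<alpha>_def)
      moreover have "\<beta> = 0" using 1 by (simp add: \<beta>_def)
      ultimately show False using eq d(1) by simp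
    next
      case 2
      have "rh \<in> roots Gh"
      proof (cases "r \<in> two_roots ?G")
        case True then show ?thesis using rr 2 by (simp add: roots_def two_roots_def)
      next
        case False
        then have six: "bil ?G r r = 6" "\<forall>w. 3 dvd bil ?G r w"
          using r by (auto simp: roots_def six_roots_def)
        have "3 dvd bil Gh rh w" for w
          using six(2)[rule_format, of "vp 0 w"] by (simp add: bil_dsum rh_def)
        then show ?thesis using six(1) rr 2 by (simp add: roots_def six_roots_def)
      qed
      then have "\<beta> \<noteq> 0" using yS by (simp add: Sset_iff \<beta>_def)
      moreover have "\<alpha> = 0" using 2 by (simp add: \<alpha>_def)
      ultimately show False using eq by simp
    next
      case 3
      define s where "s = real_of_int (bil Gh rh rh)"
      define E where "E = real_of_int (bil Ge re re)"
      have s0: "s \<le> 0" using mixed_root_neg[OF pd ev per r] 3 by (simp add: s_def re_def rh_def)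
      have sE: "E + s = 2 \<or> E + s = 6" using rr r26 unfolding s_def E_def by (metis of_int_add of_int_numeral)
      have E0: "E \<ge> 0" using sE s0 by linarith
      have "\<alpha>\<^sup>2 \<le> bil Ge v v * E"
        using cs_posdef[OF sym pd, of v "rvec re"] by (simp add: \<alpha>_def E_def bil_rvec)
      then have "\<delta>\<^sup>2 * \<alpha>\<^sup>2 \<le> \<delta>\<^sup>2 * (bil Ge v v * E)" by (simp add: mult_left_mono)
      moreover have "\<beta>\<^sup>2 = \<delta>\<^sup>2 * \<alpha>\<^sup>2" using eq by (simp add: power2_eq_square algebra_simps) (metis add.commute add_eq_0_iff minus_mult_minus mult.commute mult.left_commute)
      moreover have "\<delta>\<^sup>2 * (bil Ge v v * E) \<le> t * E" using d(2) E0 by (simp add: mult.assoc[symmetric] mult_right_mono)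
      ultimately have b2: "\<beta>\<^sup>2 \<le> t * E" by linarith
      have "rvec rh \<noteq> 0" using 3 by (metis rvec_inj rvec_zero)
      then have Q: "bil Gh (rvec rh) (rvec rh) - 2 * \<beta>\<^sup>2 / bil Gh y y > 0"
        using Qpos_div[OF hyp, of y "rvec rh"] yS by (simp add: Sset_iff \<beta>_def)
      then have Q': "- s < 2 * \<beta>\<^sup>2 / (- bil Gh y y)" by (simp add: s_def bil_rvec)
      have "2 * \<beta>\<^sup>2 / (- bil Gh y y) \<le> 2 * \<beta>\<^sup>2 / m" using Y m by (intro divide_left_mono) (auto simp: mult_neg_pos)
      also have "\<dots> \<le> 2 * (t * E) / m" using b2 m by (intro divide_right_mono) auto
      also have "\<dots> \<le> 2 * ((m / 4) * E) / m" using d(3) E0 m by (intro divide_right_mono mult_left_mono mult_right_mono) auto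
      also have "\<dots> = E / 2" using m by simp
      finally have "- s < E / 2" using Q' by linarith
      then have s6: "\<bar>s\<bar> \<le> 6" and E12: "E \<le> 12" using sE s0 by linarith+
      have "t * E \<le> t * 12" using E12 t0 by (rule mult_left_mono)
      then have "\<beta>\<^sup>2 \<le> 12 * t" using b2 by linarith
      then have b12: "\<beta>\<^sup>2 \<le> 12" using d(4) by linarith
      have "\<bar>\<beta>\<bar> \<le> 6"
      proof (rule ccontr)
        assume "\<not> \<bar>\<beta>\<bar> \<le> 6"
        then have "6\<^sup>2 < \<bar>\<beta>\<bar>\<^sup>2" by (intro power_strict_mono) auto
        then show False using b12 by simp
      qed
      then have "\<mu> \<le> \<bar>\<beta>\<bar>" using mu(2)[rule_format, of rh] s6 3 s0 y
        by (auto simp: s_def bil_rvec \<beta>_def)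
      then have "\<mu>\<^sup>2 \<le> \<beta>\<^sup>2" using mu(1) by (metis abs_ge_zero less_imp_le power2_abs power_mono)
      then show False using \<open>\<beta>\<^sup>2 \<le> 12 * t\<close> d(5) mu(1) by (smt (verit) zero_less_power)
    qed
  qed
  show ?thesis using neg nm by (simp add: Sset_iff)
qed

lemma finite_min_pos:
  fixes f :: "'a \<Rightarrow> 'b \<Rightarrow> real"
  shows "finite F \<Longrightarrow> (\<forall>a\<in>F. \<exists>\<mu>>0. \<forall>y\<in>C. \<mu> \<le> f a y) \<Longrightarrow> \<exists>\<mu>>0. \<forall>a\<in>F. \<forall>y\<in>C. \<mu> \<le> f a y"
proof (induct F rule: finite_induct)
  case empty then show ?case by (intro exI[of _ 1]) auto
next
  case (insert a F)
  then obtain \<mu>1 where 1: "\<mu>1 > 0" "\<forall>y\<in>C. \<mu>1 \<le> f a y" by auto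
  from insert obtain \<mu>2 where 2: "\<mu>2 > 0" "\<forall>b\<in>F. \<forall>y\<in>C. \<mu>2 \<le> f b y" by auto
  show ?case using 1 2 by (intro exI[of _ "min \<mu>1 \<mu>2"]) force
qed

lemma rmat_mult: "rmat (A ** B) = rmat A ** rmat B"
  by (simp add: rmat_imat imat_mult)

lemma rmat_one: "rmat (mat 1) = mat 1"
  by (simp add: rmat_imat imat_one)

lemma cc_refl: "x \<in> S \<Longrightarrow> x \<in> connected_component_set S x"
  by simp

lemma aut_component:
  fixes G :: "int^'n::finite^'n"
  assumes aut: "automorphism G g" and p: "p \<in> Sset G"
    and fp: "rmat g *v p \<in> connected_component_set (Sset G) p"
  shows "(\<lambda>x. rmat g *v x) ` connected_component_set (Sset G) p = connected_component_set (Sset G) p"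
proof -
  let ?S = "Sset G"
  let ?K = "connected_component_set ?S p"
  obtain h where h: "h ** g = mat 1" "g ** h = mat 1" using aut by (auto simp: automorphism_def)
  have auth: "automorphism G h" using aut_inv[OF aut h] .
  have KS: "?K \<subseteq> ?S" by (rule connected_component_subset)
  have img: "(\<lambda>x. rmat a *v x) ` ?K \<subseteq> ?S" if "automorphism G a" for a
    using KS aut_S[OF that] by auto
  have conn: "connected ((\<lambda>x. rmat a *v x) ` ?K)" for a
    by (intro connected_continuous_image matrix_vector_mult_linear_continuous_on connected_connected_component)
  have hg: "rmat h *v (rmat g *v x) = x" "rmat g *v (rmat h *v x) = x" for x
    using h by (simp_all add: matrix_vector_mul_assoc rmat_mult[symmetric] rmat_one)
  have "(\<lambda>x. rmat g *v x) ` ?K \<subseteq> connected_component_set ?S (rmat g *v p)"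
    using p by (intro connected_component_maximal conn img aut) auto
  also have "\<dots> = ?K" using connected_component_eq[OF fp] .
  finally have sub1: "(\<lambda>x. rmat g *v x) ` ?K \<subseteq> ?K" .
  have "p \<in> (\<lambda>x. rmat h *v x) ` ?K" using fp hg(1)[of p] by (metis image_eqI)
  then have sub2: "(\<lambda>x. rmat h *v x) ` ?K \<subseteq> ?K"
    by (intro connected_component_maximal conn img auth)
  have "?K \<subseteq> (\<lambda>x. rmat g *v x) ` ?K"
  proof
    fix x assume "x \<in> ?K"
    then have "rmat h *v x \<in> ?K" using sub2 by auto
    then show "x \<in> (\<lambda>x. rmat g *v x) ` ?K" using hg(2)[of x] by (metis image_eqI)
  qed
  with sub1 show ?thesis by blast
qed

lemma cell_dsum:
  fixes Ge :: "int^'e::finite^'e" and Gh :: "int^'h::finite^'h"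
  assumes sym: "symmetric_gram Ge" and pd: "positive_definite Ge" and ev: "even_lattice Ge"
    and per: "discr_period2 Ge" and hyp: "hyperbolic_signature Gh"
    and aut: "automorphism Gh gh" and Kh: "Kh \<in> cells_sharp Gh" and dir: "P_direct gh Kh"
  shows "\<exists>K. K \<in> cells_sharp (dsum Ge Gh) \<and> P_direct (dsum (mat 1) gh) K"
proof -
  let ?G = "dsum Ge Gh"
  let ?g = "dsum (mat 1) gh"
  obtain y0 where y0: "y0 \<in> Sset Gh" and Kh_eq: "Kh = connected_component_set (Sset Gh) y0"
    using Kh by (auto simp: cells_Sset components_def)
  have y0K: "y0 \<in> Kh" using y0 Kh_eq by simp
  have gy0K: "rmat gh *v y0 \<in> Kh" using dir y0K unfolding P_direct_def by blast
  have "open Kh" unfolding Kh_eq by (intro open_connected_component open_Sset hyp)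
  moreover have "connected Kh" unfolding Kh_eq by simp
  ultimately have "path_connected Kh" by (rule connected_open_path_connected)
  then obtain \<gamma> where \<gamma>: "path \<gamma>" "path_image \<gamma> \<subseteq> Kh" "pathstart \<gamma> = y0" "pathfinish \<gamma> = rmat gh *v y0"
    using y0K gy0K unfolding path_connected_def by blast
  define C where "C = path_image \<gamma>"
  have Cc: "compact C" "connected C" using \<gamma>(1) by (auto simp: C_def)
  have y0C: "y0 \<in> C" using \<gamma>(3) pathstart_in_path_image unfolding C_def by metis
  have gy0C: "rmat gh *v y0 \<in> C" using \<gamma>(4) pathfinish_in_path_image unfolding C_def by metis
  have CS: "C \<subseteq> Sset Gh" using \<gamma>(2) connected_component_subset Kh_eq by (auto simp: C_def)
  have Cne: "C \<noteq> {}" using y0C by auto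
  have cC: "continuous_on C (\<lambda>y. bil Gh y y)" by (intro cont_bil continuous_on_id)
  obtain y1 where y1: "y1 \<in> C" "\<forall>y\<in>C. bil Gh y y \<le> bil Gh y1 y1"
    using continuous_attains_sup[OF Cc(1) Cne cC] by auto
  define m where "m = - bil Gh y1 y1"
  have m: "m > 0" "\<forall>y\<in>C. m \<le> - bil Gh y y" using y1 CS by (auto simp: m_def Sset_iff)
  define F0 where "F0 = {re. bil Ge (rvec re) (rvec re) \<le> 6} - {0}"
  have "finite F0" unfolding F0_def using posdef_finite[OF pd] by auto
  moreover have "\<forall>r\<in>F0. r \<noteq> 0" by (simp add: F0_def)
  ultimately obtain v :: "real^'e" where v: "\<forall>re\<in>F0. bil Ge v (rvec re) \<noteq> 0"
    using avoid_hyperplanes[OF pd] by blast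
  have vF: "\<forall>re. re \<noteq> 0 \<and> bil Ge re re \<le> 6 \<longrightarrow> bil Ge v (rvec re) \<noteq> 0"
    using v by (auto simp: F0_def bil_rvec)
  define F1 where "F1 = {rh. (\<bar>bil Gh (rvec rh) (rvec rh)\<bar> \<le> 6 \<and> (\<exists>y\<in>C. \<bar>bil Gh y (rvec rh)\<bar> \<le> 6))
               \<and> rh \<noteq> 0 \<and> bil Gh rh rh \<le> 0}"
  have "finite {rh. \<bar>bil Gh (rvec rh) (rvec rh)\<bar> \<le> 6 \<and> (\<exists>y\<in>C. \<bar>bil Gh y (rvec rh)\<bar> \<le> 6)}"
    using CS by (intro finite_local[OF hyp Cc(1)]) (auto simp: Sset_iff)
  then have fF1: "finite F1" unfolding F1_def by (rule rev_finite_subset) auto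
  have each: "\<forall>rh\<in>F1. \<exists>\<mu>>0. \<forall>y\<in>C. \<mu> \<le> \<bar>bil Gh y (rvec rh)\<bar>"
  proof
    fix rh assume rh: "rh \<in> F1"
    have cc: "continuous_on C (\<lambda>y. \<bar>bil Gh y (rvec rh)\<bar>)"
      by (intro continuous_on_rabs cont_bil continuous_on_id continuous_on_const)
    obtain y2 where y2: "y2 \<in> C" "\<forall>y\<in>C. \<bar>bil Gh y2 (rvec rh)\<bar> \<le> \<bar>bil Gh y (rvec rh)\<bar>"
      using continuous_attains_inf[OF Cc(1) Cne cc] by auto
    have "bil Gh y2 (rvec rh) \<noteq> 0"
    proof
      assume z: "bil Gh y2 (rvec rh) = 0"
      have "rh \<noteq> 0" using rh by (simp add: F1_def)
      then have "rvec rh \<noteq> 0" by (metis rvec_inj rvec_zero)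
      moreover have "bil Gh y2 y2 < 0" using y2 CS by (auto simp: Sset_iff)
      ultimately have "bil Gh (rvec rh) (rvec rh) * bil Gh y2 y2 < 0"
        using Qpos[OF hyp, of y2 "rvec rh"] z by simp
      then have "bil Gh (rvec rh) (rvec rh) > 0" using \<open>bil Gh y2 y2 < 0\<close>
        by (simp add: mult_less_0_iff)
      then show False using rh by (simp add: F1_def bil_rvec)
    qed
    then show "\<exists>\<mu>>0. \<forall>y\<in>C. \<mu> \<le> \<bar>bil Gh y (rvec rh)\<bar>" using y2 by (intro exI[of _ "\<bar>bil Gh y2 (rvec rh)\<bar>"]) auto
  qed
  then obtain \<mu> where mu: "\<mu> > 0" "\<forall>rh\<in>F1. \<forall>y\<in>C. \<mu> \<le> \<bar>bil Gh y (rvec rh)\<bar>"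
    using finite_min_pos[OF fF1 each] by blast
  have mu2: "\<forall>rh. (\<bar>bil Gh (rvec rh) (rvec rh)\<bar> \<le> 6 \<and> (\<exists>y\<in>C. \<bar>bil Gh y (rvec rh)\<bar> \<le> 6))
               \<and> rh \<noteq> 0 \<and> bil Gh rh rh \<le> 0 \<longrightarrow> (\<forall>y\<in>C. \<mu> \<le> \<bar>bil Gh y (rvec rh)\<bar>)"
    using mu(2) by (auto simp: F1_def)
  define t where "t = min (m / 4) (min 1 (\<mu>\<^sup>2 / 13))"
  have t: "t > 0" "t \<le> m / 4" "t \<le> 1" "13 * t \<le> \<mu>\<^sup>2" using m mu by (auto simp: t_def)
  define Bv where "Bv = bil Ge v v"
  have Bv: "Bv \<ge> 0" using pd by (cases "v = 0") (auto simp: positive_definite_def less_imp_le Bv_def)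
  define \<delta> where "\<delta> = min 1 (t / (Bv + 1))"
  have d0: "\<delta> > 0" "\<delta> \<le> 1" using t Bv by (auto simp: \<delta>_def)
  have "\<delta>\<^sup>2 * Bv \<le> \<delta> * Bv" using d0 Bv by (intro mult_right_mono) (auto simp: power2_eq_square)
  also have "\<dots> \<le> (t / (Bv + 1)) * Bv" using Bv by (intro mult_right_mono) (auto simp: \<delta>_def)
  also have "\<dots> \<le> t" using Bv t by (simp add: field_simps)
  finally have d2: "\<delta>\<^sup>2 * bil Ge v v \<le> t" by (simp add: Bv_def)
  define D where "D = (\<lambda>y. vp (\<delta> *\<^sub>R v) y) ` C"
  have DS: "D \<subseteq> Sset ?G" unfolding D_def
    using point_in_S[OF sym pd ev per hyp CS vF m mu(1) mu2 d0(1) d2 t(2) t(3) t(4)] by auto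
  have Dc: "connected D" unfolding D_def by (intro connected_continuous_image cont_vp Cc(2))
  define p0 where "p0 = vp (\<delta> *\<^sub>R v) y0"
  have p0D: "p0 \<in> D" using y0C by (simp add: D_def p0_def)
  have fp0D: "rmat ?g *v p0 \<in> D" using gy0C by (simp add: D_def p0_def rmat_dsum_pe)
  have p0S: "p0 \<in> Sset ?G" using p0D DS by auto
  define K where "K = connected_component_set (Sset ?G) p0"
  have "K \<in> cells_sharp ?G" using p0S by (simp add: cells_Sset components_def K_def)
  moreover have "D \<subseteq> K" unfolding K_def by (rule connected_component_maximal[OF p0D Dc DS])
  then have "rmat ?g *v p0 \<in> K" using fp0D by auto
  then have "P_direct ?g K" unfolding P_direct_def K_def
    using aut_component[OF aut_dsum[OF aut] p0S] by (simp add: K_def)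
  ultimately show ?thesis by blast
qed

theorem lemma2p9:
  fixes Ge :: "int^'e::finite^'e" and Gh :: "int^'h::finite^'h"
  assumes "achiral Gh"
    and "symmetric_gram Ge" and "positive_definite Ge"
    and "generated_by_2roots Ge" and "discr_period2 Ge"
  shows "achiral (dsum Ge Gh)"
proof -
  have cl: "symmetric_gram Gh" "even_lattice Gh" "hyperbolic_signature Gh" "discr_condition Gh"
    using assms(1) by (auto simp: achiral_def considered_lattice_def)
  obtain g Kh where g: "automorphism Gh g" "Kh \<in> cells_sharp Gh" "Z3_reversing Gh g" "P_direct g Kh"
    using assms(1) by (auto simp: achiral_def)
  have ev: "even_lattice Ge" using even_from_2roots[OF assms(2,4)] .
  have "considered_lattice (dsum Ge Gh)"
    unfolding considered_lattice_def
    using symmetric_dsum[OF assms(2) cl(1)] even_dsum[OF ev cl(2)]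
      hyp_dsum[OF assms(2,3) cl(3)] discr_dsum[OF assms(5) cl(4)] by blast
  moreover obtain K where "K \<in> cells_sharp (dsum Ge Gh)" "P_direct (dsum (mat 1) g) K"
    using cell_dsum[OF assms(2,3) ev assms(5) cl(3) g(1,2,4)] by blast
  moreover have "automorphism (dsum Ge Gh) (dsum (mat 1) g)" using aut_dsum[OF g(1)] .
  moreover have "Z3_reversing (dsum Ge Gh) (dsum (mat 1) g)" using Z3_dsum[OF assms(5) g(3)] .
  ultimately show ?thesis unfolding achiral_def by blast
qed

end
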